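(* Let $q$ be a prime power and $n=q^2-1$. Let $0\le t<z$ and $\Delta=\Delta(t)=\bigcup_{j=0}^t I_{m_j}$, and let $m_t=b_0+b_1q$ be the $q$-adic expression of $m_t$ ($0\le b_0,b_1\le q-1$). Then the EAQECC associated with the extended BCH code $E_\Delta$ of length $q^2$ over $\mathbb{F}_q$ (Euclidean construction) has parameters $[[q^2,\,q^2-2\sum_{j=0}^t i_{m_j}+c,\,\ge m_{t+1}+1;\,c]]_q$, where $$c=4\Big(\tfrac{b_1(b_1+1)}{2}-\max\{0,b_1-\lceil q/2\rceil\}\,\big(b_1-\lfloor q/2\rfloor\big)+\max\{0,\,b_0-\max\{q-1-b_1,b_1\}+1\}\Big)-3\delta-2\max\Big\{0,\Big\lfloor\tfrac{m_t}{q+1}\Big\rfloor-\Big\lfloor\tfrac{q-1}{2}\Big\rfloor\Big\}-2\min\Big\{\Big\lfloor\tfrac{m_t}{q-1}\Big\rfloor,\Big\lfloor\tfrac{q}{2}\Big\rfloor\Big\},$$ with $\delta=1$ if $q$ is odd and $m_t\ge (q^2-1)/2$, and $\delta=0$ otherwise.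
   Context: Identify $\mathbb{Z}_n$ with $\mathcal{H}=\{0,1,\ldots,n-1\}$. The cyclotomic coset of $x$ with respect to $q$ is $I_x=\{xq^s \bmod n: s\ge 0\}$ (here $I_x=\{x,\,xq\bmod n\}$). Let $0=m_0<m_1<\dots<m_z$ be the minimal (least) elements of the distinct cyclotomic cosets, and $i_{m_j}=\#I_{m_j}$. Let $P_1,\dots,P_{q^2}$ be all the elements of $\mathbb{F}_{q^2}$ (roots of $X^{q^2}-X$). For $\Delta\subseteq\mathcal{H}$, $D_\Delta\subseteq\mathbb{F}_{q^2}^{q^2}$ is the code spanned by $(P_1^i,\dots,P_{q^2}^i)$, $i\in\Delta$ (with $0^0=1$), and $E_\Delta=D_\Delta\cap\mathbb{F}_q^{q^2}$ is its subfield subcode. For an $\mathbb{F}_q$-linear code $E\subseteq\mathbb{F}_q^N$ of dimension $k$ whose Euclidean dual $C$ (with respect to $x\cdot y=\sum x_iy_i$) has minimum distance $d$, the associated EAQECC is an entanglement-assisted quantum error-correcting code over $\mathbb{F}_q$ with parameters $[[N,\,N-2k+c,\,d;\,c]]_q$, where $c=\dim E-\dim(E\cap C)$. *)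

theory Defs
  imports "HOL-Computational_Algebra.Primes"
begin

definition cyc_n :: "nat \<Rightarrow> nat" where
  "cyc_n q = q^2 - 1"

definition cyc_coset :: "nat \<Rightarrow> nat \<Rightarrow> nat set" where
  "cyc_coset q x = {(x * q^s) mod cyc_n q | s. True}"

definition coset_leaders :: "nat \<Rightarrow> nat set" where
  "coset_leaders q = {x \<in> {0..<cyc_n q}. x = Min (cyc_coset q x)}"

definition leader :: "nat \<Rightarrow> nat \<Rightarrow> nat" where
  "leader q j = sorted_list_of_set (coset_leaders q) ! j"

definition leader_z :: "nat \<Rightarrow> nat" where
  "leader_z q = card (coset_leaders q) - 1"

definition Delta :: "nat \<Rightarrow> nat \<Rightarrow> nat set" where
  "Delta q t = (\<Union>j\<in>{0..t}. cyc_coset q (leader q j))"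

text \<open>Words of length q^2 over F_{q^2} are indexed by the points of the field 'a itself
  (coordinate P carries the evaluation at P). F_q is the subfield {x. x^q = x}.\<close>

definition subfield :: "nat \<Rightarrow> 'a::field set" where
  "subfield q = {x. x ^ q = x}"

text \<open>D_Delta: the F_{q^2}-span of the vectors (P^i)_P, i \<in> Delta (0^0 = 1 in Isabelle).\<close>
definition D_code :: "nat set \<Rightarrow> ('a::{field,finite} \<Rightarrow> 'a) set" where
  "D_code Dl = {v. \<exists>a::nat \<Rightarrow> 'a. v = (\<lambda>P. \<Sum>i\<in>Dl. a i * P ^ i)}"

definition E_code :: "nat \<Rightarrow> nat set \<Rightarrow> ('a::{field,finite} \<Rightarrow> 'a) set" where
  "E_code q Dl = {v \<in> D_code Dl. \<forall>P. v P \<in> subfield q}"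

definition eucl_dual :: "nat \<Rightarrow> ('a::{field,finite} \<Rightarrow> 'a) set \<Rightarrow> ('a \<Rightarrow> 'a) set" where
  "eucl_dual q E = {y. (\<forall>P. y P \<in> subfield q) \<and> (\<forall>x\<in>E. (\<Sum>P\<in>UNIV. x P * y P) = 0)}"

definition fq_span :: "nat \<Rightarrow> ('a::{field,finite} \<Rightarrow> 'a) set \<Rightarrow> ('a \<Rightarrow> 'a) set" where
  "fq_span q B = {v. \<exists>c. (\<forall>b\<in>B. c b \<in> subfield q) \<and> v = (\<lambda>P. \<Sum>b\<in>B. c b * b P)}"

definition fq_dim :: "nat \<Rightarrow> ('a::{field,finite} \<Rightarrow> 'a) set \<Rightarrow> nat" where
  "fq_dim q E = (LEAST k. \<exists>B. B \<subseteq> E \<and> card B = k \<and> fq_span q B = E)"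

definition weight :: "('a::{field,finite} \<Rightarrow> 'a) \<Rightarrow> nat" where
  "weight y = card {P. y P \<noteq> 0}"

definition min_dist :: "('a::{field,finite} \<Rightarrow> 'a) set \<Rightarrow> nat" where
  "min_dist C = Min {weight y | y. y \<in> C \<and> y \<noteq> (\<lambda>_. 0)}"

definition eaqecc_params ::
  "nat \<Rightarrow> ('a::{field,finite} \<Rightarrow> 'a) set \<Rightarrow> nat \<Rightarrow> int \<Rightarrow> nat \<Rightarrow> int \<Rightarrow> bool" where
  "eaqecc_params q E N K d c \<longleftrightarrow>
     (let C = eucl_dual q E; k = fq_dim q E in
       N = card (UNIV :: 'a set) \<and>
       c = int k - int (fq_dim q (E \<inter> C)) \<and>
       K = int N - 2 * int k + c \<and>
       min_dist C \<ge> d)"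

end

theory Submission
  imports Defs "HOL-Computational_Algebra.Polynomial" "HOL-Library.FuncSet"
begin
lemma frob_prime:
  fixes x y :: "'a::comm_ring_1"
  assumes "prime p" "of_nat p = (0::'a)"
  shows "(x + y) ^ p = x ^ p + y ^ p"
proof -
  have p0: "p > 0" using assms(1) prime_gt_0_nat by blast
  have "(x + y) ^ p = (\<Sum>k\<le>p. of_nat (p choose k) * x ^ k * y ^ (p - k))"
    by (rule binomial_ring)
  also have "\<dots> = (\<Sum>k\<in>{0,p}. of_nat (p choose k) * x ^ k * y ^ (p - k))"
  proof (rule sum.mono_neutral_right)
    show "\<forall>i\<in>{..p} - {0, p}. of_nat (p choose i) * x ^ i * y ^ (p - i) = 0"
    proof
      fix i assume i: "i \<in> {..p} - {0, p}"
      then have "p dvd (p choose i)" using dvd_choose_prime[of i p] assms(1) by auto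
      then obtain m where "p choose i = p * m" by blast
      then show "of_nat (p choose i) * x ^ i * y ^ (p - i) = 0" using assms(2) by simp
    qed
  qed auto
  also have "\<dots> = x ^ p + y ^ p" using p0 by (simp add: add.commute)
  finally show ?thesis .
qed

lemma frob_pow:
  fixes x y :: "'a::comm_ring_1"
  assumes "prime p" "of_nat p = (0::'a)"
  shows "(x + y) ^ (p ^ k) = x ^ (p ^ k) + y ^ (p ^ k)"
proof (induction k arbitrary: x y)
  case 0 then show ?case by simp
next
  case (Suc k)
  have "(x + y) ^ (p ^ Suc k) = ((x + y) ^ (p ^ k)) ^ p"
    by (simp add: power_mult[symmetric] mult.commute)
  also have "\<dots> = (x ^ (p ^ k) + y ^ (p ^ k)) ^ p" using Suc by simp
  also have "\<dots> = (x ^ (p ^ k)) ^ p + (y ^ (p ^ k)) ^ p" by (rule frob_prime[OF assms])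
  also have "\<dots> = x ^ (p ^ Suc k) + y ^ (p ^ Suc k)"
    by (simp add: power_mult[symmetric] mult.commute)
  finally show ?case .
qed

definition Trq :: "nat \<Rightarrow> 'a::field \<Rightarrow> 'a" where "Trq q x = x + x ^ q"

locale ffield =
  fixes q p r :: nat and U :: "'a::{field,finite} set"
  assumes pr: "prime p" and qpr: "q = p ^ r" and r0: "r > 0"
    and cardU: "card (UNIV :: 'a set) = q ^ 2" and Udef: "U = UNIV"
begin

lemma q2: "q \<ge> 2"
proof -
  have "p \<ge> 2" using pr prime_ge_2_nat by blast
  then have "p ^ 1 \<le> p ^ r" using r0 by (intro power_increasing) auto
  then show ?thesis using \<open>p \<ge> 2\<close> qpr by simp
qed

lemma charN: "of_nat (q^2) = (0::'a)"
proof -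
  have "(\<Sum>x\<in>(UNIV::'a set). x + 1) = (\<Sum>x\<in>(UNIV::'a set). x)"
  proof -
    have "inj (\<lambda>x::'a. x + 1)" by (auto simp: inj_def)
    moreover have "range (\<lambda>x::'a. x + 1) = UNIV"
      by (auto simp: image_iff intro!: exI[of _ "_ - 1"])
    ultimately show ?thesis using sum.reindex[of "\<lambda>x::'a. x + 1" UNIV "\<lambda>x. x"]
      by simp
  qed
  then have "of_nat (card (UNIV::'a set)) = (0::'a)"
    by (simp add: sum.distrib)
  then show ?thesis using cardU by simp
qed

lemma charp: "of_nat p = (0::'a)"
proof -
  have "(of_nat p :: 'a) ^ (2 * r) = of_nat (q^2)"
    by (simp add: qpr power_mult[symmetric] mult.commute)
  then have "(of_nat p :: 'a) ^ (2 * r) = 0" using charN by simp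
  then show ?thesis by simp
qed

lemma frob_add: "((x::'a) + y) ^ q = x ^ q + y ^ q"
  using frob_pow[OF pr charp] qpr by simp

lemma q0: "q > 0" using q2 by simp

lemma frob_neg: "(- (x::'a)) ^ q = - (x ^ q)"
proof -
  have "(- x + x) ^ q = (- x) ^ q + x ^ q" by (rule frob_add)
  then have "(- x) ^ q + x ^ q = 0" using q0 by (simp add: zero_power)
  then show ?thesis by (simp add: eq_neg_iff_add_eq_0)
qed

lemma frob_diff: "((x::'a) - y) ^ q = x ^ q - y ^ q"
  using frob_add[of x "- y"] frob_neg[of y] by simp

lemma frob_sum: "(\<Sum>i\<in>A. f i :: 'a) ^ q = (\<Sum>i\<in>A. f i ^ q)"
proof (induction A rule: infinite_finite_induct)
  case (infinite A) then show ?case using q0 by simp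
next
  case empty then show ?case using q0 by simp
next
  case (insert x F) then show ?case by (simp add: frob_add)
qed

definition nn :: nat where "nn = q^2 - 1"

lemma nn_ge: "nn \<ge> 3"
proof -
  have "q * q \<ge> 2 * 2" using q2 by (intro mult_mono) auto
  then show ?thesis unfolding nn_def power2_eq_square by simp
qed

lemma card_nz: "card (UNIV - {0::'a}) = nn"
  using cardU unfolding nn_def by (simp add: card_Diff_singleton)

lemma pow_nn: "(x::'a) \<noteq> 0 \<Longrightarrow> x ^ nn = 1"
proof -
  assume x: "x \<noteq> 0"
  let ?S = "UNIV - {0::'a}"
  have "(\<Prod>y\<in>?S. x * y) = (\<Prod>y\<in>?S. y)"
  proof -
    have "inj_on (\<lambda>y. x * y) ?S" using x by (auto simp: inj_on_def)
    moreover have "(\<lambda>y. x * y) ` ?S = ?S"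
    proof
      show "(\<lambda>y. x * y) ` ?S \<subseteq> ?S" using x by auto
      show "?S \<subseteq> (\<lambda>y. x * y) ` ?S"
      proof
        fix z assume "z \<in> ?S"
        then have "z = x * (z / x)" "z / x \<in> ?S" using x by auto
        then show "z \<in> (\<lambda>y. x * y) ` ?S" by blast
      qed
    qed
    ultimately show ?thesis using prod.reindex[of "\<lambda>y. x * y" ?S "\<lambda>y. y"] by simp
  qed
  then have "x ^ card ?S * (\<Prod>y\<in>?S. y) = (\<Prod>y\<in>?S. y)"
    by (simp add: prod.distrib)
  moreover have "(\<Prod>y\<in>?S. y) \<noteq> 0" by simp
  ultimately show "x ^ nn = 1" using card_nz by simp
qed

lemma pow_q2: "(x::'a) ^ (q^2) = x"
proof (cases "x = 0")
  case True then show ?thesis using q0 by simp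
next
  case False
  have "q^2 = nn + 1" unfolding nn_def using q0 by simp
  then show ?thesis using pow_nn[OF False] by simp
qed

lemma pow_qq: "((x::'a) ^ q) ^ q = x"
  using pow_q2 by (simp add: power_mult[symmetric] power2_eq_square)


lemma roots_bound_poly:
  fixes f :: "'a poly"
  assumes "coeff f k \<noteq> 0" "degree f \<le> k"
  shows "card {x. poly f x = 0} \<le> k"
proof -
  have "f \<noteq> 0" using assms(1) by auto
  then show ?thesis using card_poly_roots_bound[of f] assms(2) by simp
qed

lemma card_pow_eq1: assumes False: "i \<noteq> 0" shows "card {x::'a. x ^ i = 1} \<le> i"
proof -
  let ?f = "monom (1::'a) i - 1"
  have "coeff ?f i \<noteq> 0" using False by simp
  moreover have "degree ?f \<le> i"
    using degree_diff_le[of "monom (1::'a) i" i 1] by (simp add: degree_monom_eq)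
  ultimately have "card {x. poly ?f x = 0} \<le> i" by (rule roots_bound_poly)
  moreover have "{x. poly ?f x = 0} = {x::'a. x ^ i = 1}" by (auto simp: poly_monom)
  ultimately show ?thesis by simp
qed

lemma exists_pow_ne1:
  assumes "i < nn" "i \<noteq> 0"
  shows "\<exists>a::'a. a \<noteq> 0 \<and> a ^ i \<noteq> 1"
proof (rule ccontr)
  assume "\<not> ?thesis"
  then have "UNIV - {0::'a} \<subseteq> {x::'a. x ^ i = 1}" by auto
  then have "card (UNIV - {0::'a}) \<le> card {x::'a. x ^ i = 1}" by (intro card_mono) auto
  then show False using card_nz card_pow_eq1[of i] assms \<open>i \<noteq> 0\<close> by simp
qed

lemma psum_zero:
  assumes "i < nn"
  shows "(\<Sum>P\<in>(UNIV::'a set). P ^ i) = 0"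
proof (cases "i = 0")
  case True
  then show ?thesis using charN cardU by simp
next
  case False
  obtain a :: 'a where a: "a \<noteq> 0" "a ^ i \<noteq> 1" using exists_pow_ne1[OF assms False] by blast
  have "(\<Sum>P\<in>(UNIV::'a set). (a * P) ^ i) = (\<Sum>P\<in>(UNIV::'a set). P ^ i)"
  proof -
    have "inj (\<lambda>P::'a. a * P)" using a by (auto simp: inj_def)
    moreover have "range (\<lambda>P::'a. a * P) = UNIV"
    proof -
      have "\<And>z. z = a * (z / a)" using a by simp
      then show ?thesis by blast
    qed
    ultimately show ?thesis using sum.reindex[of "\<lambda>P::'a. a * P" UNIV "\<lambda>P. P ^ i"] by simp
  qed
  then have "a ^ i * (\<Sum>P\<in>(UNIV::'a set). P ^ i) = 1 * (\<Sum>P\<in>(UNIV::'a set). P ^ i)"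
    by (simp add: power_mult_distrib sum_distrib_left)
  then show ?thesis using a(2) by (metis mult_cancel_right)
qed

lemma psum_nn: "(\<Sum>P\<in>(UNIV::'a set). P ^ nn) = -1"
proof -
  have "(\<Sum>P\<in>(UNIV::'a set). P ^ nn) = (\<Sum>P\<in>(UNIV::'a set). if P = 0 then 0 else 1)"
    using pow_nn nn_ge by (intro sum.cong) (auto simp: zero_power)
  also have "\<dots> = of_nat (card (UNIV - {0::'a}))"
    by (simp add: sum.If_cases Collect_neg_eq Compl_eq_Diff_UNIV)
  also have "\<dots> = of_nat (q^2) - 1" using card_nz unfolding nn_def
    using q0 by (simp add: of_nat_diff)
  finally show ?thesis using charN by simp
qed

lemma psum:
  assumes "k < 2 * nn"
  shows "(\<Sum>P\<in>(UNIV::'a set). P ^ k) = (if k = nn then -1 else 0)"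
proof -
  consider "k < nn" | "k = nn" | "nn < k" by linarith
  then show ?thesis
  proof cases
    case 1 then show ?thesis using psum_zero by simp
  next
    case 2 then show ?thesis using psum_nn by simp
  next
    case 3
    have "(\<Sum>P\<in>(UNIV::'a set). P ^ k) = (\<Sum>P\<in>(UNIV::'a set). P ^ (k - nn))"
    proof (intro sum.cong refl)
      fix P :: 'a
      show "P ^ k = P ^ (k - nn)"
      proof (cases "P = 0")
        case True then show ?thesis using 3 by (simp add: zero_power)
      next
        case False
        have "P ^ k = P ^ (k - nn) * P ^ nn" using 3 by (simp add: power_add[symmetric])
        then show ?thesis using pow_nn[OF False] by simp
      qed
    qed
    also have "\<dots> = 0" using 3 assms psum_zero by simp
    finally show ?thesis using 3 by simp
  qed
qed

definition K :: "'a set" where "K = {x. x ^ q = x}"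

lemma K_sub: "K = subfield q" unfolding K_def subfield_def by simp

lemma card_K: "card K \<le> q"
proof -
  let ?f = "monom (1::'a) q - monom 1 1"
  have "coeff ?f q \<noteq> 0" using q2 by simp
  moreover have "degree ?f \<le> q"
    proof -
    have "degree (monom (1::'a) 1) \<le> q" using q2 by (simp add: degree_monom_eq)
    then show ?thesis using degree_diff_le[of "monom (1::'a) q" q "monom 1 1"] by (simp add: degree_monom_eq)
  qed
  ultimately have "card {x. poly ?f x = 0} \<le> q" by (rule roots_bound_poly)
  moreover have "{x. poly ?f x = 0} = K" by (auto simp: poly_monom K_def)
  ultimately show ?thesis by simp
qed

lemma card_antiK: "card {x::'a. x ^ q + x = 0} \<le> q"
proof -
  let ?f = "monom (1::'a) q + monom 1 1"
  have "coeff ?f q \<noteq> 0" using q2 by simp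
  moreover have "degree ?f \<le> q"
    proof -
    have "degree (monom (1::'a) 1) \<le> q" using q2 by (simp add: degree_monom_eq)
    then show ?thesis using degree_add_le[of "monom (1::'a) q" q "monom 1 1"] by (simp add: degree_monom_eq)
  qed
  ultimately have "card {x. poly ?f x = 0} \<le> q" by (rule roots_bound_poly)
  moreover have "{x. poly ?f x = 0} = {x::'a. x ^ q + x = 0}" by (auto simp: poly_monom)
  ultimately show ?thesis by simp
qed

lemma q_lt_N: "q < q^2"
  using q2 by (simp add: power2_eq_square)

lemma exists_nonK: "\<exists>g::'a. g \<notin> K"
proof (rule ccontr)
  assume "\<not> ?thesis"
  then have "K = UNIV" by auto
  then show False using card_K cardU q_lt_N by simp
qed

lemma exists_tr_nz: "\<exists>y::'a. y + y ^ q \<noteq> 0"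
proof (rule ccontr)
  assume "\<not> ?thesis"
  then have "{x::'a. x ^ q + x = 0} = UNIV" by (auto simp: add.commute)
  then show False using card_antiK cardU q_lt_N by simp
qed

lemma K_0[simp]: "0 \<in> K" unfolding K_def using q0 by (simp add: zero_power)
lemma K_1[simp]: "1 \<in> K" unfolding K_def by simp
lemma K_add[simp]: "x \<in> K \<Longrightarrow> y \<in> K \<Longrightarrow> x + y \<in> K" unfolding K_def by (simp add: frob_add)
lemma K_mult[simp]: "x \<in> K \<Longrightarrow> y \<in> K \<Longrightarrow> x * y \<in> K" unfolding K_def by (simp add: power_mult_distrib)
lemma K_neg[simp]: "x \<in> K \<Longrightarrow> - x \<in> K" unfolding K_def by (simp add: frob_neg)
lemma K_diff[simp]: "x \<in> K \<Longrightarrow> y \<in> K \<Longrightarrow> x - y \<in> K" unfolding K_def by (simp add: frob_diff)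
lemma K_divide[simp]: "x \<in> K \<Longrightarrow> y \<in> K \<Longrightarrow> x / y \<in> K" unfolding K_def by (simp add: power_divide)
lemma K_sum[simp]: "(\<And>i. i \<in> A \<Longrightarrow> f i \<in> K) \<Longrightarrow> sum f A \<in> K"
  by (induction A rule: infinite_finite_induct) auto
lemma K_iff: "x \<in> K \<longleftrightarrow> x ^ q = x" unfolding K_def by simp
lemma Tr_K[simp]: "Trq q x \<in> K" unfolding K_def Trq_def by (simp add: frob_add pow_qq add.commute)

lemma decompK:
  assumes g: "g \<notin> K"
  shows "\<exists>\<alpha> \<beta>. \<alpha> \<in> K \<and> \<beta> \<in> K \<and> x = \<alpha> + \<beta> * g"
proof -
  have gg: "g - g ^ q \<noteq> 0" using g unfolding K_def by simp
  define \<beta> where "\<beta> = (x - x ^ q) / (g - g ^ q)"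
  define \<alpha> where "\<alpha> = x - \<beta> * g"
  have b: "\<beta> \<in> K"
  proof -
    have "\<beta> ^ q = (x ^ q - x) / (g ^ q - g)"
      unfolding \<beta>_def by (simp add: power_divide frob_diff pow_qq)
    also have "\<dots> = \<beta>" unfolding \<beta>_def
      by (metis minus_diff_eq minus_divide_divide)
    finally show ?thesis unfolding K_def by simp
  qed
  have "\<alpha> ^ q = x ^ q - \<beta> * g ^ q"
    using b unfolding \<alpha>_def K_def by (simp add: frob_diff power_mult_distrib)
  also have "\<dots> = \<alpha>"
  proof -
    have "\<beta> * (g - g ^ q) = x - x ^ q" unfolding \<beta>_def using gg by simp
    then show ?thesis unfolding \<alpha>_def by (simp add: algebra_simps)
  qed
  finally have "\<alpha> \<in> K" unfolding K_def by simp
  moreover have "x = \<alpha> + \<beta> * g" unfolding \<alpha>_def by simp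
  ultimately show ?thesis using b by blast
qed

lemma indepK:
  assumes g: "g \<notin> K" and "\<alpha> \<in> K" "\<beta> \<in> K" "\<alpha> + \<beta> * g = 0"
  shows "\<alpha> = 0 \<and> \<beta> = 0"
proof (cases "\<beta> = 0")
  case True then show ?thesis using assms by simp
next
  case False
  then have "g = - \<alpha> / \<beta>" using assms(4) by (simp add: field_simps add_eq_0_iff)
  then have "g \<in> K" using assms by simp
  then show ?thesis using g by simp
qed

lemma tr_nondeg:
  assumes "a \<noteq> (0::'a)"
  shows "\<exists>\<beta>. Trq q (a * \<beta>) \<noteq> 0"
proof -
  obtain y :: 'a where "y + y ^ q \<noteq> 0" using exists_tr_nz by blast
  then have "Trq q (a * (y / a)) \<noteq> 0" using assms unfolding Trq_def by simp
  then show ?thesis by blast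
qed

end

context ffield
begin

definition sg :: "nat \<Rightarrow> nat" where "sg i = i * q mod nn"

definition ev :: "nat set \<Rightarrow> (nat \<Rightarrow> 'a) \<Rightarrow> 'a \<Rightarrow> 'a" where
  "ev G a = (\<lambda>P. \<Sum>i\<in>G. a i * P ^ i)"

definition closedG :: "nat set \<Rightarrow> bool" where
  "closedG G \<longleftrightarrow> G \<subseteq> {..<nn} \<and> (\<forall>i\<in>G. sg i \<in> G)"

lemma nn_pos: "nn > 0" using nn_ge by simp

lemma qq_eq: "q * q = nn + 1" unfolding nn_def using q0 by (simp add: power2_eq_square)

lemma sg_lt: "sg i < nn" unfolding sg_def using nn_pos by simp

lemma sg_sg: "i < nn \<Longrightarrow> sg (sg i) = i"
proof -
  assume i: "i < nn"
  have "sg (sg i) = (i * q mod nn) * q mod nn" unfolding sg_def by simp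
  also have "\<dots> = i * q * q mod nn" by (simp add: mod_mult_left_eq)
  also have "\<dots> = (i * nn + i) mod nn" using qq_eq by (simp add: algebra_simps)
  also have "\<dots> = i" using i by simp
  finally show ?thesis .
qed

lemma sg_0[simp]: "sg 0 = 0" unfolding sg_def by simp

lemma sg_eq0: "i < nn \<Longrightarrow> sg i = 0 \<longleftrightarrow> i = 0"
  using sg_sg by (metis sg_0)

lemma pow_mod_nn: "(P::'a) \<noteq> 0 \<Longrightarrow> P ^ k = P ^ (k mod nn)"
proof -
  assume P: "P \<noteq> 0"
  have "P ^ k = P ^ (nn * (k div nn) + k mod nn)" by simp
  also have "\<dots> = (P ^ nn) ^ (k div nn) * P ^ (k mod nn)"
    by (simp only: power_add power_mult)
  finally show ?thesis using pow_nn[OF P] by simp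
qed

lemma pow_sg: "i < nn \<Longrightarrow> ((P::'a) ^ i) ^ q = P ^ sg i"
proof (cases "P = 0")
  case True
  assume i: "i < nn"
  show ?thesis
  proof (cases "i = 0")
    case True then show ?thesis using \<open>P = 0\<close> by simp
  next
    case False
    then have "sg i \<noteq> 0" using sg_eq0 i by simp
    then show ?thesis using \<open>P = 0\<close> False q0 by (simp add: zero_power)
  qed
next
  case False
  assume i: "i < nn"
  have "(P ^ i) ^ q = P ^ (i * q)" by (simp add: power_mult)
  also have "\<dots> = P ^ sg i" unfolding sg_def using pow_mod_nn[OF False] by simp
  finally show ?thesis .
qed

lemma ev_poly:
  assumes "finite G"
  shows "ev G a P = poly (\<Sum>i\<in>G. monom (a i) i) P"
  unfolding ev_def by (simp add: poly_sum poly_monom)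

lemma inj_ev:
  assumes G: "G \<subseteq> {..<nn}" and eq: "ev G a = ev G b" and i: "i \<in> G"
  shows "a i = b i"
proof -
  have fin: "finite G" using G finite_subset by blast
  let ?f = "\<Sum>j\<in>G. monom (a j - b j) j"
  have "\<forall>P. poly ?f P = 0"
  proof
    fix P
    have "poly ?f P = (\<Sum>j\<in>G. (a j - b j) * P ^ j)" by (simp add: poly_sum poly_monom)
    also have "\<dots> = ev G a P - ev G b P" unfolding ev_def
      by (simp add: algebra_simps sum_subtractf)
    finally show "poly ?f P = 0" using eq by simp
  qed
  have "?f = 0"
  proof (rule ccontr)
    assume nz: "?f \<noteq> 0"
    have "\<And>j. j \<in> G \<Longrightarrow> degree (monom (a j - b j) j) \<le> nn" using G degree_monom_le
      by (meson lessThan_iff order.trans less_imp_le subsetD)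
    then have "degree ?f \<le> nn" by (intro degree_sum_le fin)
    moreover have "card {x. poly ?f x = 0} \<le> degree ?f" by (rule card_poly_roots_bound[OF nz])
    moreover have "{x. poly ?f x = 0} = UNIV" using \<open>\<forall>P. poly ?f P = 0\<close> by auto
    moreover have "(q::nat)^2 > 0" using q0 by simp
    ultimately show False using cardU unfolding nn_def by (metis (no_types, lifting) diff_less le_trans less_numeral_extra(1) mem_Collect_eq not_le)
  qed
  then have "coeff ?f i = 0" by simp
  moreover have "coeff ?f i = a i - b i" using fin i by (simp add: coeff_sum)
  ultimately show ?thesis by simp
qed

lemma closed_fin: "closedG G \<Longrightarrow> finite G"
  unfolding closedG_def using finite_subset by blast

lemma sum_sg_reindex:
  assumes "closedG G"
  shows "(\<Sum>i\<in>G. f (sg i)) = (\<Sum>i\<in>G. f i)"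
  by (rule sum.reindex_bij_witness[of _ sg sg]) (use assms sg_sg in \<open>auto simp: closedG_def\<close>)

lemma ev_pow:
  assumes "closedG G"
  shows "(ev G a P) ^ q = ev G (\<lambda>j. a (sg j) ^ q) P"
proof -
  have "(ev G a P) ^ q = (\<Sum>i\<in>G. a i ^ q * P ^ sg i)"
    unfolding ev_def using assms unfolding closedG_def
    by (auto simp: frob_sum power_mult_distrib pow_sg intro!: sum.cong)
  also have "\<dots> = (\<Sum>i\<in>G. a (sg (sg i)) ^ q * P ^ sg i)"
    using assms unfolding closedG_def by (auto simp: sg_sg intro!: sum.cong)
  also have "\<dots> = (\<Sum>i\<in>G. a (sg i) ^ q * P ^ i)"
    using sum_sg_reindex[OF assms, of "\<lambda>i. a (sg i) ^ q * P ^ i"] by simp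
  finally show ?thesis unfolding ev_def by simp
qed

lemma evK_iff:
  assumes "closedG G"
  shows "(\<forall>P. ev G a P \<in> K) \<longleftrightarrow> (\<forall>i\<in>G. a (sg i) = a i ^ q)"
proof
  assume H: "\<forall>P. ev G a P \<in> K"
  have "ev G a = ev G (\<lambda>j. a (sg j) ^ q)"
  proof
    fix P show "ev G a P = ev G (\<lambda>j. a (sg j) ^ q) P"
      using H ev_pow[OF assms] unfolding K_def by auto
  qed
  then have E: "\<forall>j\<in>G. a j = a (sg j) ^ q"
    using inj_ev assms unfolding closedG_def by blast
  show "\<forall>i\<in>G. a (sg i) = a i ^ q"
  proof
    fix i assume i: "i \<in> G"
    then have "sg i \<in> G" "i < nn" using assms unfolding closedG_def by auto
    then show "a (sg i) = a i ^ q" using E sg_sg by metis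
  qed
next
  assume H: "\<forall>i\<in>G. a (sg i) = a i ^ q"
  show "\<forall>P. ev G a P \<in> K"
  proof
    fix P
    have "ev G (\<lambda>j. a (sg j) ^ q) P = ev G a P"
      unfolding ev_def using H by (auto simp: pow_qq intro!: sum.cong)
    then show "ev G a P \<in> K" using ev_pow[OF assms] unfolding K_def by simp
  qed
qed

lemma E_code_eq:
  assumes "closedG G"
  shows "E_code q G = {v. \<exists>a. v = ev G a \<and> (\<forall>i\<in>G. a (sg i) = a i ^ q)}"
  unfolding E_code_def D_code_def subfield_def
  using evK_iff[OF assms, unfolded K_def] unfolding ev_def by auto

end

context ffield
begin

lemma card_K_ge2: "card K \<ge> 2"
proof -
  have "{0, 1} \<subseteq> K" by auto
  then have "card {0::'a, 1} \<le> card K" by (intro card_mono) auto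
  then show ?thesis by simp
qed

lemma span_card_le:
  fixes B :: "('a \<Rightarrow> 'a) set"
  shows "card (fq_span q B) \<le> card K ^ card B"
proof -
  have finB: "finite B" by simp
  let ?cb = "\<lambda>c. (\<lambda>P. \<Sum>b\<in>B. c b * b P)"
  have "fq_span q B \<subseteq> ?cb ` (PiE B (\<lambda>_. K))"
  proof
    fix v assume "v \<in> fq_span q B"
    then obtain c where c: "\<forall>b\<in>B. c b \<in> K" "v = ?cb c"
      unfolding fq_span_def K_sub by blast
    have "v = ?cb (restrict c B)" using c(2) by (auto intro!: sum.cong)
    moreover have "restrict c B \<in> PiE B (\<lambda>_. K)" using c(1) by auto
    ultimately show "v \<in> ?cb ` (PiE B (\<lambda>_. K))" by blast
  qed
  then have "card (fq_span q B) \<le> card (?cb ` (PiE B (\<lambda>_. K)))"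
    by (intro card_mono) auto
  also have "\<dots> \<le> card (PiE B (\<lambda>_. K :: 'a set))" by (rule card_image_le) (simp add: finite_PiE)
  also have "\<dots> = card K ^ card B" using finB by (simp add: card_PiE)
  finally show ?thesis .
qed

lemma dimG:
  fixes u :: "'i \<Rightarrow> 'a \<Rightarrow> 'a"
  assumes fin: "finite I"
    and indep: "\<And>c. (\<forall>j\<in>I. c j \<in> K) \<Longrightarrow> (\<lambda>P. \<Sum>j\<in>I. c j * u j P) = (\<lambda>_. 0) \<Longrightarrow> \<forall>j\<in>I. c j = 0"
    and S: "S = {v. \<exists>c. (\<forall>j\<in>I. c j \<in> K) \<and> v = (\<lambda>P. \<Sum>j\<in>I. c j * u j P)}"
  shows "fq_dim q S = card I"
proof -
  let ?cm = "\<lambda>c. (\<lambda>P. \<Sum>j\<in>I. c j * u j P)"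
  have indep2: "\<forall>j\<in>I. c j = c' j" if "\<forall>j\<in>I. c j \<in> K" "\<forall>j\<in>I. c' j \<in> K" "?cm c = ?cm c'" for c c'
  proof -
    have "?cm (\<lambda>j. c j - c' j) = (\<lambda>_. 0)"
    proof
      fix P
      have "?cm c P = ?cm c' P" using that(3) by metis
      then show "?cm (\<lambda>j. c j - c' j) P = 0"
        by (simp add: algebra_simps sum_subtractf)
    qed
    then have "\<forall>j\<in>I. c j - c' j = 0" using indep[of "\<lambda>j. c j - c' j"] that by auto
    then show ?thesis by simp
  qed
  have inj: "inj_on u I"
  proof
    fix j k assume jk: "j \<in> I" "k \<in> I" "u j = u k"
    show "j = k"
    proof (rule ccontr)
      assume ne: "j \<noteq> k"
      let ?c = "\<lambda>i. (if i = j then 1 else 0) - (if i = k then 1 else (0::'a))"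
      have "?cm ?c = (\<lambda>P. u j P - u k P)"
      proof
        fix P
        have "(\<Sum>i\<in>I. ?c i * u i P) = (\<Sum>i\<in>I. (if i = j then u i P else 0)) - (\<Sum>i\<in>I. (if i = k then u i P else 0))"
          unfolding sum_subtractf[symmetric] by (rule sum.cong) (simp_all add: left_diff_distrib)
        then show "?cm ?c P = u j P - u k P" using fin jk by simp
      qed
      also have "\<dots> = (\<lambda>_. 0)" using jk by simp
      finally have z: "?cm ?c = (\<lambda>_. 0)" .
      have cK: "\<forall>i\<in>I. ?c i \<in> K" by simp
      have "\<forall>i\<in>I. ?c i = 0" by (rule indep[OF cK z])
      then show False using jk ne by auto
    qed
  qed
  let ?B = "u ` I"
  have cardB: "card ?B = card I" using card_image[OF inj] .
  have span: "fq_span q ?B = S"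
  proof
    show "fq_span q ?B \<subseteq> S"
    proof
      fix v assume "v \<in> fq_span q ?B"
      then obtain c where c: "\<forall>b\<in>?B. c b \<in> K" "v = (\<lambda>P. \<Sum>b\<in>?B. c b * b P)"
        unfolding fq_span_def K_sub by blast
      have "v = ?cm (\<lambda>j. c (u j))"
      proof
        fix P
        have "(\<Sum>b\<in>?B. c b * b P) = (\<Sum>j\<in>I. c (u j) * u j P)"
          using sum.reindex[OF inj, of "\<lambda>b. c b * b P"] by (simp add: comp_def)
        then show "v P = ?cm (\<lambda>j. c (u j)) P" using c(2) by simp
      qed
      then show "v \<in> S" unfolding S using c(1) by auto
    qed
    show "S \<subseteq> fq_span q ?B"
    proof
      fix v assume "v \<in> S"
      then obtain c where c: "\<forall>j\<in>I. c j \<in> K" "v = ?cm c" unfolding S by blast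
      let ?c = "\<lambda>b. c (the_inv_into I u b)"
      have "\<forall>b\<in>?B. ?c b \<in> K" using c(1) the_inv_into_f_f[OF inj] by auto
      moreover have "v = (\<lambda>P. \<Sum>b\<in>?B. ?c b * b P)"
      proof
        fix P
        have "(\<Sum>b\<in>?B. ?c b * b P) = (\<Sum>j\<in>I. ?c (u j) * u j P)"
          using sum.reindex[OF inj, of "\<lambda>b. ?c b * b P"] by (simp add: comp_def)
        also have "\<dots> = (\<Sum>j\<in>I. c j * u j P)"
          using the_inv_into_f_f[OF inj] by (intro sum.cong) auto
        finally show "v P = (\<Sum>b\<in>?B. ?c b * b P)" using c(2) by simp
      qed
      ultimately show "v \<in> fq_span q ?B" unfolding fq_span_def K_sub[symmetric] mem_Collect_eq
        by (intro exI[of _ ?c]) blast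
    qed
  qed
  have sub: "?B \<subseteq> S"
  proof
    fix v assume "v \<in> ?B"
    then obtain j where j: "j \<in> I" "v = u j" by blast
    let ?c = "\<lambda>i. if i = j then 1 else (0::'a)"
    have "?cm ?c = u j" using fin j(1) by (auto simp: if_distrib[of "\<lambda>x. x * _"] cong: if_cong)
    then show "v \<in> S" unfolding S using j by (intro CollectI exI[of _ ?c]) auto
  qed
  have cardS: "card S = card K ^ card I"
  proof -
    have eqS: "S = ?cm ` PiE I (\<lambda>_. K)"
    proof
      show "S \<subseteq> ?cm ` PiE I (\<lambda>_. K)"
      proof
        fix v assume "v \<in> S"
        then obtain c where c: "\<forall>j\<in>I. c j \<in> K" "v = ?cm c" unfolding S by blast
        have "v = ?cm (restrict c I)" using c(2) by (auto intro!: sum.cong)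
        moreover have "restrict c I \<in> PiE I (\<lambda>_. K)" using c(1) by auto
        ultimately show "v \<in> ?cm ` PiE I (\<lambda>_. K)" by blast
      qed
      show "?cm ` PiE I (\<lambda>_. K) \<subseteq> S"
      proof
        fix v assume "v \<in> ?cm ` PiE I (\<lambda>_. K)"
        then obtain c where c: "c \<in> PiE I (\<lambda>_. K)" "v = ?cm c" by blast
        have "\<forall>j\<in>I. c j \<in> K" using c(1) PiE_mem by fast
        then show "v \<in> S" unfolding S using c(2) by blast
      qed
    qed
    have injC: "inj_on ?cm (PiE I (\<lambda>_. K))"
    proof
      fix c c' assume c: "c \<in> PiE I (\<lambda>_. K)" "c' \<in> PiE I (\<lambda>_. K)" "?cm c = ?cm c'"
      have "\<forall>j\<in>I. c j \<in> K" "\<forall>j\<in>I. c' j \<in> K" using c(1,2) PiE_mem by fast+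
      then have "\<forall>j\<in>I. c j = c' j" using indep2[of c c'] c(3) by blast
      then show "c = c'" by (intro PiE_ext[OF c(1) c(2)]) blast
    qed
    have "card (?cm ` PiE I (\<lambda>_. K)) = card (PiE I (\<lambda>_. K))" by (rule card_image[OF injC])
    then have "card S = card (PiE I (\<lambda>_. K :: 'a set))" by (simp only: eqS)
    also have "\<dots> = (\<Prod>i\<in>I. card K)" by (rule card_PiE[OF fin])
    also have "\<dots> = card K ^ card I" by (rule prod_constant)
    finally show ?thesis .
  qed
  show ?thesis unfolding fq_dim_def
  proof (rule Least_equality)
    show "\<exists>B. B \<subseteq> S \<and> card B = card I \<and> fq_span q B = S"
      using sub cardB span by blast
  next
    fix k assume "\<exists>B. B \<subseteq> S \<and> card B = k \<and> fq_span q B = S"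
    then obtain B where B: "card B = k" "fq_span q B = S" by blast
    have "card K ^ card I \<le> card K ^ k" using span_card_le[of B] B cardS by simp
    moreover have "1 < card K" using card_K_ge2 by simp
    ultimately show "card I \<le> k" using power_le_imp_le_exp by blast
  qed
qed

end

context ffield
begin

definition gg :: 'a where "gg = (SOME g. g \<notin> K)"

lemma gg: "gg \<notin> K" unfolding gg_def using exists_nonK someI_ex by metis

definition Acf :: "nat \<Rightarrow> 'a" where
  "Acf j = (if sg j = j then 1 else if j < sg j then 1 else gg ^ q)"
definition Bcf :: "nat \<Rightarrow> 'a" where
  "Bcf j = (if sg j = j then 0 else if j < sg j then 1 else gg)"
definition wv :: "nat \<Rightarrow> nat \<Rightarrow> 'a" where
  "wv j = (\<lambda>k. (if k = j then Acf j else 0) + (if k = sg j then Bcf j else 0))"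

definition Wc :: "nat set \<Rightarrow> (nat \<Rightarrow> 'a) \<Rightarrow> nat \<Rightarrow> 'a" where
  "Wc G c k = (\<Sum>j\<in>G. c j * wv j k)"

lemma comb_ev:
  assumes "finite G"
  shows "(\<lambda>P. \<Sum>j\<in>G. c j * ev G (wv j) P) = ev G (Wc G c)"
proof
  fix P
  have "(\<Sum>j\<in>G. c j * ev G (wv j) P) = (\<Sum>j\<in>G. \<Sum>k\<in>G. c j * wv j k * P ^ k)"
    unfolding ev_def by (simp add: sum_distrib_left mult.assoc)
  also have "\<dots> = (\<Sum>k\<in>G. \<Sum>j\<in>G. c j * wv j k * P ^ k)" by (rule sum.swap)
  also have "\<dots> = ev G (Wc G c) P" unfolding ev_def Wc_def by (simp add: sum_distrib_right)
  finally show "(\<Sum>j\<in>G. c j * ev G (wv j) P) = ev G (Wc G c) P" .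
qed

lemma Wc_eq:
  assumes G: "closedG G" and k: "k \<in> G"
  shows "Wc G c k = c k * Acf k + c (sg k) * Bcf (sg k)"
proof -
  have fin: "finite G" using closed_fin[OF G] .
  have kn: "k < nn" and sk: "sg k \<in> G" using G k unfolding closedG_def by auto
  have iff: "\<And>j. j \<in> G \<Longrightarrow> (k = sg j) = (j = sg k)"
    using G kn sg_sg unfolding closedG_def by (metis lessThan_iff subsetD)
  have "Wc G c k = (\<Sum>j\<in>G. (if j = k then c j * Acf j else 0)) + (\<Sum>j\<in>G. (if j = sg k then c j * Bcf j else 0))"
    unfolding Wc_def wv_def sum.distrib[symmetric]
    by (rule sum.cong) (auto simp: iff distrib_left)
  also have "\<dots> = c k * Acf k + c (sg k) * Bcf (sg k)" using fin k sk by simp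
  finally show ?thesis .
qed

lemma Wc_val:
  assumes G: "closedG G" and k: "k \<in> G"
  shows "Wc G c k = (if sg k = k then c k else if k < sg k then c k + c (sg k) * gg
                     else c k * gg ^ q + c (sg k))"
proof -
  have kn: "k < nn" using G k unfolding closedG_def by auto
  have ss: "sg (sg k) = k" using sg_sg[OF kn] .
  show ?thesis unfolding Wc_eq[OF G k] Acf_def Bcf_def using ss
    by (cases "sg k = k"; cases "k < sg k") auto
qed

definition dcA :: "'a \<Rightarrow> 'a" where
  "dcA x = fst (SOME ab. fst ab \<in> K \<and> snd ab \<in> K \<and> x = fst ab + snd ab * gg)"
definition dcB :: "'a \<Rightarrow> 'a" where
  "dcB x = snd (SOME ab. fst ab \<in> K \<and> snd ab \<in> K \<and> x = fst ab + snd ab * gg)"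

lemma dc: "dcA x \<in> K \<and> dcB x \<in> K \<and> x = dcA x + dcB x * gg"
proof -
  obtain \<alpha> \<beta> where "\<alpha> \<in> K" "\<beta> \<in> K" "x = \<alpha> + \<beta> * gg" using decompK[OF gg] by blast
  then have "\<exists>ab. fst ab \<in> K \<and> snd ab \<in> K \<and> x = fst ab + snd ab * gg"
    by (intro exI[of _ "(\<alpha>, \<beta>)"]) simp
  from someI_ex[OF this] show ?thesis unfolding dcA_def dcB_def by blast
qed

definition uv :: "nat set \<Rightarrow> nat \<Rightarrow> 'a \<Rightarrow> 'a" where
  "uv G j = ev G (wv j)"

lemma E_code_span:
  assumes G: "closedG G"
  shows "(E_code q G :: ('a \<Rightarrow> 'a) set) = {v. \<exists>c. (\<forall>j\<in>G. c j \<in> K) \<and> v = (\<lambda>P. \<Sum>j\<in>G. c j * uv G j P)}"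
proof -
  have fin: "finite G" using closed_fin[OF G] .
  have Gn: "\<And>k. k \<in> G \<Longrightarrow> k < nn \<and> sg k \<in> G \<and> sg (sg k) = k"
    using G sg_sg unfolding closedG_def by auto
  show ?thesis
  proof
    show "(E_code q G :: ('a \<Rightarrow> 'a) set) \<subseteq> {v. \<exists>c. (\<forall>j\<in>G. c j \<in> K) \<and> v = (\<lambda>P. \<Sum>j\<in>G. c j * uv G j P)}"
    proof
      fix v assume "v \<in> (E_code q G :: ('a \<Rightarrow> 'a) set)"
      then obtain a where a: "v = ev G a" "\<forall>i\<in>G. a (sg i) = a i ^ q"
        unfolding E_code_eq[OF G] by blast
      define c where "c k = (if sg k = k then a k else if k < sg k then dcA (a k) else dcB (a (sg k)))" for k
      have cK: "\<forall>j\<in>G. c j \<in> K"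
      proof
        fix j assume j: "j \<in> G"
        show "c j \<in> K"
        proof (cases "sg j = j")
          case True
          then have "a j ^ q = a j" using a(2) j by metis
          then show ?thesis using True unfolding c_def K_def by simp
        qed (auto simp: c_def dc)
      qed
      have W: "Wc G c k = a k" if k: "k \<in> G" for k
      proof -
        have kk: "k < nn" "sg k \<in> G" "sg (sg k) = k" using Gn[OF k] by auto
        consider "sg k = k" | "k < sg k" | "sg k < k" by linarith
        then show ?thesis
        proof cases
          case 1 then show ?thesis unfolding Wc_val[OF G k] c_def by simp
        next
          case 2
          then have "Wc G c k = dcA (a k) + dcB (a k) * gg"
            unfolding Wc_val[OF G k] c_def using kk by auto
          then show ?thesis using dc by metis
        next
          case 3
          let ?x = "a (sg k)"
          have "Wc G c k = dcB ?x * gg ^ q + dcA ?x"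
            unfolding Wc_val[OF G k] c_def using kk 3 by auto
          also have "\<dots> = (dcA ?x + dcB ?x * gg) ^ q"
          proof -
            have e: "(dcA ?x + dcB ?x * gg) ^ q = dcA ?x ^ q + dcB ?x ^ q * gg ^ q"
              by (simp add: frob_add power_mult_distrib)
            have "dcA ?x ^ q = dcA ?x" "dcB ?x ^ q = dcB ?x" using dc[of ?x] unfolding K_def by auto
            then show ?thesis using e by (simp add: add.commute)
          qed
          also have "\<dots> = ?x ^ q" using dc[of ?x] by metis
          also have "\<dots> = a k" using a(2) kk by metis
          finally show ?thesis .
        qed
      qed
      have "v = ev G (Wc G c)" unfolding a(1) ev_def using W by (intro ext sum.cong) auto
      then have "v = (\<lambda>P. \<Sum>j\<in>G. c j * uv G j P)" unfolding uv_def using comb_ev[OF fin] by simp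
      then show "v \<in> {v. \<exists>c. (\<forall>j\<in>G. c j \<in> K) \<and> v = (\<lambda>P. \<Sum>j\<in>G. c j * uv G j P)}"
        using cK by blast
    qed
  next
    show "{v. \<exists>c. (\<forall>j\<in>G. c j \<in> K) \<and> v = (\<lambda>P. \<Sum>j\<in>G. c j * uv G j P)} \<subseteq> (E_code q G :: ('a \<Rightarrow> 'a) set)"
    proof
      fix v assume "v \<in> {v. \<exists>c. (\<forall>j\<in>G. c j \<in> K) \<and> v = (\<lambda>P. \<Sum>j\<in>G. c j * uv G j P)}"
      then obtain c where c: "\<forall>j\<in>G. c j \<in> K" "v = (\<lambda>P. \<Sum>j\<in>G. c j * uv G j P)" by blast
      have v: "v = ev G (Wc G c)" using c(2) comb_ev[OF fin] unfolding uv_def by simp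
      have cq: "\<And>j. j \<in> G \<Longrightarrow> c j ^ q = c j" using c(1) unfolding K_def by auto
      have "\<forall>k\<in>G. Wc G c (sg k) = Wc G c k ^ q"
      proof
        fix k assume k: "k \<in> G"
        have kk: "k < nn" "sg k \<in> G" "sg (sg k) = k" using Gn[OF k] by auto
        have sk: "Wc G c (sg k) = (if sg (sg k) = sg k then c (sg k) else if sg k < sg (sg k) then c (sg k) + c (sg (sg k)) * gg
                     else c (sg k) * gg ^ q + c (sg (sg k)))" by (rule Wc_val[OF G kk(2)])
        consider "sg k = k" | "k < sg k" | "sg k < k" by linarith
        then show "Wc G c (sg k) = Wc G c k ^ q"
        proof cases
          case 1 then show ?thesis using Wc_val[OF G k] cq k by simp
        next
          case 2 then show ?thesis unfolding Wc_val[OF G k] sk using cq k kk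
            by (simp add: frob_add power_mult_distrib add.commute)
        next
          case 3 then show ?thesis unfolding Wc_val[OF G k] sk using cq k kk
            by (simp add: frob_add power_mult_distrib pow_qq add.commute)
        qed
      qed
      then show "v \<in> E_code q G" unfolding E_code_eq[OF G] v by blast
    qed
  qed
qed

lemma dim_E:
  assumes G: "closedG G"
  shows "fq_dim q (E_code q G :: ('a \<Rightarrow> 'a) set) = card G"
proof (rule dimG[OF closed_fin[OF G] _ E_code_span[OF G]])
  fix c assume cK: "\<forall>j\<in>G. c j \<in> K" and z: "(\<lambda>P. \<Sum>j\<in>G. c j * uv G j P) = (\<lambda>_. 0)"
  have Gn: "\<And>k. k \<in> G \<Longrightarrow> k < nn \<and> sg k \<in> G \<and> sg (sg k) = k"
    using G sg_sg unfolding closedG_def by auto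
  have "ev G (Wc G c) = ev G (\<lambda>_. 0)"
    using z comb_ev[OF closed_fin[OF G]] unfolding uv_def ev_def by simp
  then have W0: "\<And>k. k \<in> G \<Longrightarrow> Wc G c k = 0"
    using inj_ev G unfolding closedG_def by blast
  have lt: "c k = 0 \<and> c (sg k) = 0" if k: "k \<in> G" "k < sg k" for k
  proof -
    have "c k + c (sg k) * gg = 0" using W0[OF k(1)] k unfolding Wc_val[OF G k(1)] by simp
    then show ?thesis using indepK[OF gg] cK Gn k by blast
  qed
  show "\<forall>j\<in>G. c j = 0"
  proof
    fix k assume k: "k \<in> G"
    have kk: "k < nn" "sg k \<in> G" "sg (sg k) = k" using Gn[OF k] by auto
    consider "sg k = k" | "k < sg k" | "sg k < k" by linarith
    then show "c k = 0"
    proof cases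
      case 1 then show ?thesis using W0[OF k] unfolding Wc_val[OF G k] by simp
    next
      case 2 then show ?thesis using lt k by blast
    next
      case 3 then show ?thesis using lt[of "sg k"] kk by simp
    qed
  qed
qed

end

context ffield
begin

definition Dp :: "nat set \<Rightarrow> nat set" where
  "Dp G = {i\<in>G. 0 < i \<and> nn - i \<in> G}"

lemma sg_neg:
  assumes "0 < i" "i < nn"
  shows "sg (nn - i) = nn - sg i"
proof -
  let ?x = "(nn - i) * q mod nn" and ?y = "i * q mod nn"
  have "(?x + ?y) mod nn = ((nn - i) * q + i * q) mod nn" by (simp add: mod_add_eq)
  also have "(nn - i) * q + i * q = nn * q"
  proof -
    have "nn - i + i = nn" using assms by simp
    then show ?thesis by (metis add_mult_distrib)
  qed
  finally have m0: "(?x + ?y) mod nn = 0" by simp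
  have y0: "?y \<noteq> 0" using sg_eq0[of i] assms unfolding sg_def by simp
  have "?x < nn" "?y < nn" using nn_pos by auto
  from m0 obtain k where k: "?x + ?y = nn * k" by (auto simp: mod_eq_0_iff_dvd dvd_def)
  have "nn * k < nn * 2" using k \<open>?x < nn\<close> \<open>?y < nn\<close> by linarith
  then have "k < 2" by simp
  moreover have "k \<noteq> 0" using k y0 by (metis add_is_0 mult_0_right)
  ultimately have "k = 1" by linarith
  then have "?x + ?y = nn" using k by simp
  then show ?thesis unfolding sg_def by simp
qed

lemma Dp_closed:
  assumes G: "closedG G" and i: "i \<in> Dp G"
  shows "sg i \<in> Dp G"
proof -
  have i': "i \<in> G" "0 < i" "nn - i \<in> G" "i < nn" using i G unfolding Dp_def closedG_def by auto
  have "sg i \<in> G" using G i'(1) unfolding closedG_def by auto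
  moreover have "0 < sg i" using sg_eq0[OF i'(4)] i'(2) by simp
  moreover have "nn - sg i \<in> G" using sg_neg[OF i'(2) i'(4)] G i'(3) unfolding closedG_def by metis
  ultimately show ?thesis unfolding Dp_def by simp
qed

lemma closed_diff_Dp:
  assumes G: "closedG G"
  shows "closedG (G - Dp G)"
  unfolding closedG_def
proof (intro conjI ballI)
  show "G - Dp G \<subseteq> {..<nn}" using G unfolding closedG_def by auto
  fix i assume i: "i \<in> G - Dp G"
  have "sg i \<in> G" using G i unfolding closedG_def by auto
  moreover have "sg i \<notin> Dp G"
  proof
    assume "sg i \<in> Dp G"
    then have "sg (sg i) \<in> Dp G" using Dp_closed[OF G] by blast
    then show False using i sg_sg G unfolding closedG_def by auto
  qed
  ultimately show "sg i \<in> G - Dp G" by simp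
qed

lemma inner_ev:
  assumes G1: "G1 \<subseteq> {..<nn}" and G2: "G2 \<subseteq> {..<nn}"
  shows "(\<Sum>P\<in>UNIV. ev G1 a P * ev G2 b P) = - (\<Sum>i\<in>G1. if nn - i \<in> G2 then a i * b (nn - i) else 0)"
proof -
  have f1: "finite G1" and f2: "finite G2" using G1 G2 finite_subset by auto
  have pt: "\<And>P. ev G1 a P * ev G2 b P = (\<Sum>i\<in>G1. \<Sum>j\<in>G2. a i * b j * P ^ (i + j))"
    unfolding ev_def sum_product by (intro sum.cong refl) (simp add: power_add mult_ac)
  have "(\<Sum>P\<in>UNIV. ev G1 a P * ev G2 b P) = (\<Sum>P\<in>UNIV. \<Sum>i\<in>G1. \<Sum>j\<in>G2. a i * b j * P ^ (i + j))"
    using pt by simp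
  also have "\<dots> = (\<Sum>i\<in>G1. \<Sum>P\<in>UNIV. \<Sum>j\<in>G2. a i * b j * P ^ (i + j))"
    by (rule sum.swap)
  also have "\<dots> = (\<Sum>i\<in>G1. \<Sum>j\<in>G2. \<Sum>P\<in>UNIV. a i * b j * P ^ (i + j))"
    by (intro sum.cong refl) (rule sum.swap)
  also have "\<dots> = (\<Sum>i\<in>G1. \<Sum>j\<in>G2. a i * b j * (\<Sum>P\<in>UNIV. P ^ (i + j)))"
    by (intro sum.cong refl) (rule sum_distrib_left[symmetric])
  also have "\<dots> = (\<Sum>i\<in>G1. \<Sum>j\<in>G2. if j = nn - i then - (a i * b j) else 0)"
  proof (intro sum.cong refl)
    fix i j assume i: "i \<in> G1" and j: "j \<in> G2"
    have "i < nn" "j < nn" using i j G1 G2 by auto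
    then have "i + j < 2 * nn" by simp
    then have "(\<Sum>P\<in>UNIV. P ^ (i + j)) = (if i + j = nn then -1 else (0::'a))" by (rule psum)
    moreover have "(i + j = nn) = (j = nn - i)" using \<open>i < nn\<close> \<open>j < nn\<close> by auto
    ultimately show "a i * b j * (\<Sum>P\<in>UNIV. P ^ (i + j)) = (if j = nn - i then - (a i * b j) else 0)"
      by simp
  qed
  also have "\<dots> = (\<Sum>i\<in>G1. if nn - i \<in> G2 then - (a i * b (nn - i)) else 0)"
    using f2 by (simp add: sum.delta')
  also have "\<dots> = - (\<Sum>i\<in>G1. if nn - i \<in> G2 then a i * b (nn - i) else 0)"
    by (simp add: sum_negf[symmetric] if_distrib cong: if_cong)
  finally show ?thesis .
qed

lemma sum_ev_pow:
  assumes G: "G \<subseteq> {..<nn}" and j: "j < nn"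
  shows "(\<Sum>P\<in>UNIV. ev G a P * P ^ j) = - (if nn - j \<in> G then a (nn - j) else 0)"
proof -
  have "(\<Sum>P\<in>UNIV. ev G a P * P ^ j) = (\<Sum>P\<in>UNIV. ev G a P * ev {j} (\<lambda>_. 1) P)"
    unfolding ev_def by simp
  also have "\<dots> = - (\<Sum>i\<in>G. if nn - i \<in> {j} then a i * 1 else 0)"
    by (rule inner_ev[OF G]) (use j in auto)
  also have "(\<Sum>i\<in>G. if nn - i \<in> {j} then a i * 1 else 0) = (\<Sum>i\<in>G. if i = nn - j then a i else 0)"
    using G j by (intro sum.cong) auto
  also have "\<dots> = (if nn - j \<in> G then a (nn - j) else 0)"
  proof -
    have "finite G" using G finite_subset by blast
    then show ?thesis by (simp add: sum.delta)
  qed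
  finally show ?thesis .
qed

definition trv :: "'a \<Rightarrow> nat \<Rightarrow> 'a \<Rightarrow> 'a" where
  "trv \<beta> j = (\<lambda>P. Trq q (\<beta> * P ^ j))"

lemma trv_in_E:
  assumes G: "closedG G" and j: "j \<in> G"
  shows "trv \<beta> j \<in> (E_code q G :: ('a \<Rightarrow> 'a) set)"
proof -
  have fin: "finite G" using closed_fin[OF G] .
  have jn: "j < nn" "sg j \<in> G" using G j unfolding closedG_def by auto
  let ?a = "\<lambda>k. (if k = j then \<beta> else 0) + (if k = sg j then \<beta> ^ q else 0)"
  have eq: "trv \<beta> j = (\<lambda>P. \<Sum>k\<in>G. ?a k * P ^ k)"
  proof
    fix P
    have "(\<Sum>k\<in>G. ?a k * P ^ k) = (\<Sum>k\<in>G. (if k = j then \<beta> * P ^ k else 0)) + (\<Sum>k\<in>G. (if k = sg j then \<beta> ^ q * P ^ k else 0))"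
      unfolding sum.distrib[symmetric] by (rule sum.cong) (auto simp: distrib_right)
    also have "\<dots> = \<beta> * P ^ j + \<beta> ^ q * P ^ sg j" using fin j jn by simp
    also have "\<dots> = trv \<beta> j P" unfolding trv_def Trq_def
      using pow_sg[OF jn(1)] by (simp add: power_mult_distrib)
    finally show "trv \<beta> j P = (\<Sum>k\<in>G. ?a k * P ^ k)" by simp
  qed
  have d: "trv \<beta> j \<in> D_code G" unfolding D_code_def mem_Collect_eq
    by (rule exI[where x="?a"]) (rule eq)
  have "\<forall>P. trv \<beta> j P \<in> subfield q" unfolding trv_def K_sub[symmetric] by simp
  then show ?thesis unfolding E_code_def using d by blast
qed

lemma sum_trv:
  assumes v: "\<forall>P. v P \<in> K"
  shows "(\<Sum>P\<in>UNIV. trv \<beta> j P * v P) = Trq q (\<beta> * (\<Sum>P\<in>UNIV. v P * P ^ j))"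
proof -
  have pt: "trv \<beta> j P * v P = \<beta> * P ^ j * v P + (\<beta> * P ^ j * v P) ^ q" for P
  proof -
    have vq: "v P ^ q = v P" using v K_iff by blast
    have "trv \<beta> j P * v P = \<beta> * P ^ j * v P + (\<beta> * P ^ j) ^ q * v P"
      unfolding trv_def Trq_def by (simp only: distrib_right)
    also have "(\<beta> * P ^ j) ^ q * v P = (\<beta> * P ^ j * v P) ^ q"
      by (simp only: power_mult_distrib[of "\<beta> * P ^ j" "v P"] vq)
    finally show ?thesis .
  qed
  have "(\<Sum>P\<in>UNIV. trv \<beta> j P * v P) = (\<Sum>P\<in>UNIV. \<beta> * P ^ j * v P) + (\<Sum>P\<in>UNIV. (\<beta> * P ^ j * v P) ^ q)"
    unfolding pt by (rule sum.distrib)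
  also have "\<dots> = (\<Sum>P\<in>UNIV. \<beta> * P ^ j * v P) + (\<Sum>P\<in>UNIV. \<beta> * P ^ j * v P) ^ q"
    by (simp only: frob_sum)
  also have "(\<Sum>P\<in>UNIV. \<beta> * P ^ j * v P) = \<beta> * (\<Sum>P\<in>UNIV. v P * P ^ j)"
    by (simp add: sum_distrib_left mult_ac)
  finally show ?thesis unfolding Trq_def .
qed

lemma tr_all_zero:
  assumes "\<And>\<beta>. Trq q (\<beta> * x) = 0"
  shows "x = (0::'a)"
  using tr_nondeg[of x] assms by (metis mult.commute)

lemma hull_eq:
  assumes G: "closedG G"
  shows "(E_code q G :: ('a \<Rightarrow> 'a) set) \<inter> eucl_dual q (E_code q G) = E_code q (G - Dp G)"
proof
  have Gn: "G \<subseteq> {..<nn}" using G unfolding closedG_def by auto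
  have G': "closedG (G - Dp G)" by (rule closed_diff_Dp[OF G])
  show "(E_code q G :: ('a \<Rightarrow> 'a) set) \<inter> eucl_dual q (E_code q G) \<subseteq> E_code q (G - Dp G)"
  proof
    fix v :: "'a \<Rightarrow> 'a"
    assume v: "v \<in> E_code q G \<inter> eucl_dual q (E_code q G)"
    then obtain a where a: "v = ev G a" "\<forall>i\<in>G. a (sg i) = a i ^ q"
      unfolding E_code_eq[OF G] by blast
    have vK: "\<forall>P. v P \<in> K" using v unfolding E_code_def K_sub by blast
    have orth: "\<And>x. x \<in> (E_code q G :: ('a \<Rightarrow> 'a) set) \<Longrightarrow> (\<Sum>P\<in>UNIV. x P * v P) = 0"
      using v unfolding eucl_dual_def by blast
    have a0: "a i = 0" if i: "i \<in> Dp G" for i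
    proof -
      have i': "i \<in> G" "0 < i" "nn - i \<in> G" "i < nn" using i Gn unfolding Dp_def by auto
      let ?j = "nn - i"
      have jn: "?j < nn" using i' by simp
      have "\<And>\<beta>. Trq q (\<beta> * (- a i)) = 0"
      proof -
        fix \<beta>
        have "(\<Sum>P\<in>UNIV. trv \<beta> ?j P * v P) = 0" using orth trv_in_E[OF G i'(3)] by blast
        moreover have "(\<Sum>P\<in>UNIV. trv \<beta> ?j P * v P) = Trq q (\<beta> * (\<Sum>P\<in>UNIV. v P * P ^ ?j))"
          by (rule sum_trv[OF vK])
        moreover have "(\<Sum>P\<in>UNIV. v P * P ^ ?j) = - a i"
          unfolding a(1) using sum_ev_pow[OF Gn jn, of a] i' by simp
        ultimately show "Trq q (\<beta> * (- a i)) = 0" by simp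
      qed
      then have "- a i = 0" by (rule tr_all_zero)
      then show ?thesis by simp
    qed
    have "v = ev (G - Dp G) a"
      unfolding a(1) ev_def
      by (intro ext sum.mono_neutral_right) (use closed_fin[OF G] a0 in auto)
    moreover have "\<forall>i\<in>G - Dp G. a (sg i) = a i ^ q" using a(2) by auto
    ultimately show "v \<in> E_code q (G - Dp G)" unfolding E_code_eq[OF G'] by blast
  qed
  show "(E_code q (G - Dp G) :: ('a \<Rightarrow> 'a) set) \<subseteq> E_code q G \<inter> eucl_dual q (E_code q G)"
  proof
    fix v :: "'a \<Rightarrow> 'a"
    assume v: "v \<in> E_code q (G - Dp G)"
    then obtain a where a: "v = ev (G - Dp G) a" "\<forall>i\<in>G - Dp G. a (sg i) = a i ^ q"
      unfolding E_code_eq[OF G'] by blast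
    have vK: "\<forall>P. v P \<in> subfield q" using v unfolding E_code_def by blast
    define a' where "a' k = (if k \<in> G - Dp G then a k else 0)" for k
    have v': "v = ev G a'"
    proof
      fix P
      have "(\<Sum>i\<in>G. a' i * P ^ i) = (\<Sum>i\<in>G - Dp G. a i * P ^ i)"
        by (rule sum.mono_neutral_cong_right) (use closed_fin[OF G] in \<open>auto simp: a'_def\<close>)
      then show "v P = ev G a' P" unfolding a(1) ev_def by simp
    qed
    have conj: "\<forall>i\<in>G. a' (sg i) = a' i ^ q"
    proof
      fix i assume i: "i \<in> G"
      show "a' (sg i) = a' i ^ q"
      proof (cases "i \<in> Dp G")
        case True
        then have "sg i \<in> Dp G" using Dp_closed[OF G] by blast
        then show ?thesis using True q0 unfolding a'_def by (simp add: zero_power)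
      next
        case False
        then have "sg i \<in> G - Dp G" using G' i unfolding closedG_def by auto
        then show ?thesis using False i a(2) unfolding a'_def by auto
      qed
    qed
    have inE: "v \<in> (E_code q G :: ('a \<Rightarrow> 'a) set)" unfolding E_code_eq[OF G] using v' conj by blast
    have "\<forall>x\<in>(E_code q G :: ('a \<Rightarrow> 'a) set). (\<Sum>P\<in>UNIV. x P * v P) = 0"
    proof
      fix x assume "x \<in> (E_code q G :: ('a \<Rightarrow> 'a) set)"
      then obtain b where b: "x = ev G b" unfolding E_code_eq[OF G] by blast
      have "(\<Sum>P\<in>UNIV. x P * v P) = - (\<Sum>i\<in>G. if nn - i \<in> G - Dp G then b i * a (nn - i) else 0)"
        unfolding b a(1) by (rule inner_ev) (use Gn in auto)
      also have "(\<Sum>i\<in>G. if nn - i \<in> G - Dp G then b i * a (nn - i) else 0) = 0"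
      proof (rule sum.neutral, rule ballI)
        fix i assume i: "i \<in> G"
        have "\<not> (nn - i \<in> G - Dp G)"
        proof
          assume h: "nn - i \<in> G - Dp G"
          have "i < nn" using i Gn by auto
          then have "0 < nn - i" "nn - (nn - i) = i" by auto
          then have "nn - i \<in> Dp G" using h i unfolding Dp_def by auto
          then show False using h by simp
        qed
        then show "(if nn - i \<in> G - Dp G then b i * a (nn - i) else 0) = 0" by (rule if_not_P)
      qed
      finally show "(\<Sum>P\<in>UNIV. x P * v P) = 0" by simp
    qed
    then have "v \<in> eucl_dual q (E_code q G)" unfolding eucl_dual_def using vK by blast
    then show "v \<in> E_code q G \<inter> eucl_dual q (E_code q G)" using inE by blast
  qed
qed

end

context ffield
begin

lemma dual_K:
  "y \<in> eucl_dual q (E :: ('a \<Rightarrow> 'a) set) \<Longrightarrow> \<forall>P. y P \<in> K"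
  unfolding eucl_dual_def K_sub by blast

lemma dual_ortho_pow:
  assumes G: "closedG G" and y: "y \<in> eucl_dual q (E_code q G :: ('a \<Rightarrow> 'a) set)" and i: "i \<in> G"
  shows "(\<Sum>P\<in>UNIV. y P * P ^ i) = 0"
proof (rule tr_all_zero)
  fix \<beta>
  have "(\<Sum>P\<in>UNIV. trv \<beta> i P * y P) = 0"
    using y trv_in_E[OF G i] unfolding eucl_dual_def by blast
  then show "Trq q (\<beta> * (\<Sum>P\<in>UNIV. y P * P ^ i)) = 0"
    using sum_trv[OF dual_K[OF y]] by simp
qed

lemma weight_ge:
  assumes G: "closedG G" and D: "{..<D} \<subseteq> G"
    and y: "y \<in> eucl_dual q (E_code q G :: ('a \<Rightarrow> 'a) set)" and ynz: "y \<noteq> (\<lambda>_. 0)"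
  shows "D + 1 \<le> weight y"
proof (rule ccontr)
  assume "\<not> D + 1 \<le> weight y"
  then have cS: "card {P. y P \<noteq> 0} \<le> D" unfolding weight_def by simp
  let ?S = "{P. y P \<noteq> 0}"
  obtain Q where Q: "y Q \<noteq> 0" using ynz by auto
  let ?f = "\<Prod>P\<in>?S - {Q}. [:- P, 1:]"
  have "degree ?f \<le> (\<Sum>P\<in>?S - {Q}. degree [:- P, 1:])"
    using degree_prod_sum_le[of "?S - {Q}" "\<lambda>P. [:- P, 1:]"] by (simp add: comp_def)
  also have "\<dots> = card (?S - {Q})" by simp
  also have "\<dots> < D"
  proof -
    have QS: "Q \<in> ?S" using Q by simp
    then have "card ?S > 0" by (auto simp: card_gt_0_iff)
    moreover have "card (?S - {Q}) = card ?S - 1" using QS by (simp add: card_Diff_singleton)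
    ultimately show ?thesis using cS by linarith
  qed
  finally have degf: "degree ?f < D" .
  have "(\<Sum>P\<in>UNIV. y P * poly ?f P) = (\<Sum>P\<in>UNIV. \<Sum>k\<le>degree ?f. coeff ?f k * (y P * P ^ k))"
    unfolding poly_altdef by (simp add: sum_distrib_left mult_ac)
  also have "\<dots> = (\<Sum>k\<le>degree ?f. \<Sum>P\<in>UNIV. coeff ?f k * (y P * P ^ k))" by (rule sum.swap)
  also have "\<dots> = (\<Sum>k\<le>degree ?f. coeff ?f k * (\<Sum>P\<in>UNIV. y P * P ^ k))"
    by (simp add: sum_distrib_left)
  also have "\<dots> = 0"
  proof (rule sum.neutral, rule ballI)
    fix k assume "k \<in> {..degree ?f}"
    then have "k \<in> G" using degf D by auto
    then show "coeff ?f k * (\<Sum>P\<in>UNIV. y P * P ^ k) = 0" using dual_ortho_pow[OF G y] by simp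
  qed
  finally have z: "(\<Sum>P\<in>UNIV. y P * poly ?f P) = 0" .
  have "(\<Sum>P\<in>UNIV. y P * poly ?f P) = y Q * poly ?f Q + (\<Sum>P\<in>UNIV - {Q}. y P * poly ?f P)"
    by (simp add: sum.remove)
  also have "(\<Sum>P\<in>UNIV - {Q}. y P * poly ?f P) = 0"
  proof (rule sum.neutral, rule ballI)
    fix P assume P: "P \<in> UNIV - {Q}"
    show "y P * poly ?f P = 0"
    proof (cases "y P = 0")
      case False
      then have "P \<in> ?S - {Q}" using P by auto
      then have "poly ?f P = 0" unfolding poly_prod
        by (intro prod_zero) (auto intro!: bexI[of _ P])
      then show ?thesis by simp
    qed simp
  qed
  finally have "y Q * poly ?f Q = 0" using z by simp
  moreover have "poly ?f Q \<noteq> 0" unfolding poly_prod by (simp add: prod_zero_iff)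
  ultimately show False using Q by simp
qed

lemma ones_dual:
  assumes G: "closedG G"
  shows "(\<lambda>_. 1) \<in> eucl_dual q (E_code q G :: ('a \<Rightarrow> 'a) set)"
proof -
  have Gn: "G \<subseteq> {..<nn}" using G unfolding closedG_def by auto
  have "\<forall>x\<in>(E_code q G :: ('a \<Rightarrow> 'a) set). (\<Sum>P\<in>UNIV. x P * 1) = 0"
  proof
    fix x assume "x \<in> (E_code q G :: ('a \<Rightarrow> 'a) set)"
    then obtain b where b: "x = ev G b" unfolding E_code_eq[OF G] by blast
    have "(\<Sum>P\<in>UNIV. ev G b P * P ^ 0) = - (if nn - 0 \<in> G then b (nn - 0) else 0)"
      by (rule sum_ev_pow[OF Gn nn_pos])
    then show "(\<Sum>P\<in>UNIV. x P * 1) = 0" using Gn b by auto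
  qed
  moreover have "\<forall>P. (1::'a) \<in> subfield q" unfolding K_sub[symmetric] by simp
  ultimately show ?thesis unfolding eucl_dual_def by blast
qed

lemma min_dist_ge:
  assumes G: "closedG G" and D: "{..<D} \<subseteq> G"
  shows "D + 1 \<le> min_dist (eucl_dual q (E_code q G :: ('a \<Rightarrow> 'a) set))"
proof -
  let ?C = "eucl_dual q (E_code q G :: ('a \<Rightarrow> 'a) set)"
  let ?W = "{weight y | y. y \<in> ?C \<and> y \<noteq> (\<lambda>_. 0)}"
  have fin: "finite ?W"
  proof -
    have "?W \<subseteq> weight ` (UNIV :: ('a \<Rightarrow> 'a) set)" by auto
    then show ?thesis by (rule finite_subset) simp
  qed
  have ne: "?W \<noteq> {}"
  proof -
    have "(\<lambda>_. 1::'a) \<noteq> (\<lambda>_. 0)" by (metis zero_neq_one)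
    then have "weight (\<lambda>_. 1::'a) \<in> ?W" using ones_dual[OF G] by blast
    then show ?thesis by blast
  qed
  have "\<forall>w\<in>?W. D + 1 \<le> w" using weight_ge[OF G D] by blast
  then show ?thesis unfolding min_dist_def using fin ne by simp
qed

end

lemma lex_le:
  fixes q u v w z :: nat
  assumes "u < q" "w < q"
  shows "(u + v * q \<le> w + z * q) \<longleftrightarrow> (v < z \<or> (v = z \<and> u \<le> w))"
proof -
  consider "v < z" | "v = z" | "z < v" by linarith
  then show ?thesis
  proof cases
    case 1
    then have "Suc v * q \<le> z * q" by (intro mult_le_mono1) simp
    then show ?thesis using assms 1 by simp
  next
    case 2 then show ?thesis by simp
  next
    case 3
    then have "Suc z * q \<le> v * q" by (intro mult_le_mono1) simp
    then show ?thesis using assms 3 by simp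
  qed
qed

definition cform :: "nat \<Rightarrow> nat \<Rightarrow> int" where
  "cform q mt = (let b0 = int (mt mod q); b1 = int (mt div q); qi = int q;
         \<delta> = (if odd q \<and> 2 * mt \<ge> q^2 - 1 then 1 else 0 :: int)
     in 4 * (b1 * (b1 + 1) div 2
                  - max 0 (b1 - (qi + 1) div 2) * (b1 - qi div 2)
                  + max 0 (b0 - max (qi - 1 - b1) b1 + 1))
             - 3 * \<delta>
             - 2 * max 0 (int (mt div (q + 1)) - (qi - 1) div 2)
             - 2 * min (int (mt div (q - 1))) (qi div 2))"

lemma even_prod_succ: "(x::int) * (x + 1) div 2 * 2 = x * (x + 1)"
  by simp

lemma final_arith:
  fixes q b0 b1 S :: nat
  assumes q2: "q \<ge> 2" and b: "b1 \<le> b0" "b0 < q" "\<not> (b0 = q - 1 \<and> b1 = q - 1)"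
    and S: "2 * S = (b1 - (q-1-b1)) * (b1 - (q-1-b1) - 1)"
  shows "cform q (b0 + b1*q) = int (2 * (b1*b1 - S + (min b1 (q-1-b1) - (q-1-b0)) + (b0 - max b1 (q-1-b1))
            + (if b1 < q-1-b1 \<and> q-1-b1 \<le> b0 \<and> q-1-b0 \<le> b1 then 1 else 0)) + (b1 + 1 - (q-1-b1)))"
proof -
  let ?m = "b0 + b1 * q"
  have md: "?m mod q = b0" "?m div q = b1" using b by auto
  have d1: "?m div (q + 1) = b1"
  proof -
    have "?m = b1 * (q + 1) + (b0 - b1)" using b by (simp add: algebra_simps)
    moreover have "b0 - b1 < q + 1" using b by simp
    ultimately show ?thesis by (metis div_mult_self1 div_less add.commute add_0 not_add_less1 zero_less_Suc add_Suc_right div_add_self1 add_gr_0 nat_neq_iff)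
  qed
  have d2: "?m div (q - 1) = b1 + (if b0 + b1 \<ge> q - 1 then 1 else 0)"
  proof -
    have e: "?m = b1 * (q - 1) + (b0 + b1)" using q2 by (simp add: algebra_simps)
    have lt: "b0 + b1 < 2 * (q - 1)" using b q2 by auto
    show ?thesis
    proof (cases "b0 + b1 \<ge> q - 1")
      case True
      have f: "(b1 + 1) * (q - 1) = b1 * (q - 1) + (q - 1)" by (simp add: add_mult_distrib)
      have "?m = (b0 + b1 - (q - 1)) + (b1 + 1) * (q - 1)" unfolding f using e True by linarith
      then have "?m div (q - 1) = (b1 + 1) + (b0 + b1 - (q - 1)) div (q - 1)"
        using q2 by (simp only: div_mult_self1[of "q - 1"])
      moreover have "(b0 + b1 - (q - 1)) div (q - 1) = 0" using lt True by (intro div_less) simp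
      ultimately show ?thesis using True by simp
    next
      case False
      have "?m = (b0 + b1) + b1 * (q - 1)" using e by simp
      then have "?m div (q - 1) = b1 + (b0 + b1) div (q - 1)"
        using q2 by (simp only: div_mult_self1[of "q - 1"])
      then show ?thesis using False by simp
    qed
  qed
  have dl: "odd q \<Longrightarrow> (2 * ?m \<ge> q^2 - 1) = (q div 2 < b1 \<or> (b1 = q div 2 \<and> q div 2 \<le> b0))"
  proof -
    assume "odd q"
    then obtain k where k: "q = 2 * k + 1" by (metis oddE)
    have qq: "q^2 - 1 = 2 * (k + k * q)" unfolding k by (simp add: power2_eq_square algebra_simps)
    then have "(2 * ?m \<ge> q^2 - 1) = (k + k * q \<le> b0 + b1 * q)" unfolding qq by (simp only: mult_le_cancel1) simp
    also have "\<dots> = (k < b1 \<or> (k = b1 \<and> k \<le> b0))" by (rule lex_le) (use k b in auto)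
    finally show ?thesis using k by auto
  qed
  have SS: "int (2 * S) = int (b1 - (q-1-b1)) * int (b1 - (q-1-b1) - 1)" using S by simp
  have P: "int b1 * (int b1 + 1) div 2 * 2 = int b1 * (int b1 + 1)" by simp
  have P': "int b1 * (int b1 + 1) div 2 * 4 = 2 * int b1 * int b1 + 2 * int b1"
  proof -
    have "int b1 * (int b1 + 1) div 2 * 4 = 2 * (int b1 * (int b1 + 1))" using P by simp
    then show ?thesis by (simp add: algebra_simps)
  qed
  have q1: "(int q - 1) div 2 = int ((q - 1) div 2)" "(int q + 1) div 2 = int ((q + 1) div 2)"
    "int q div 2 = int (q div 2)" using q2 by (simp_all add: zdiv_int of_nat_diff)
  define e where "e = (if b0 + b1 \<ge> q - 1 then 1 else 0 :: int)"
  define dd where "dd = (if odd q \<and> 2 * ?m \<ge> q^2 - 1 then 1 else 0 :: int)"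
  have cf: "cform q ?m = 4 * (int b1 * (int b1 + 1) div 2 - max 0 (int b1 - int ((q + 1) div 2)) * (int b1 - int (q div 2))
      + max 0 (int b0 - max (int q - 1 - int b1) (int b1) + 1)) - 3 * dd
      - 2 * max 0 (int b1 - int ((q - 1) div 2)) - 2 * min (int b1 + e) (int (q div 2))"
    unfolding cform_def Let_def md d1 d2 q1 e_def dd_def by simp
  consider (A) "b1 < q-1-b1" | (B) "b1 = q-1-b1" | (C) "q-1-b1 < b1" by linarith
  then show ?thesis
  proof cases
    case A
    then have S0: "S = 0" using S by simp
    have r1: "max 0 (int b1 - int ((q + 1) div 2)) = 0" using A by auto
    have r2: "max (int q - 1 - int b1) (int b1) = int q - 1 - int b1" using A by auto
    have r3: "dd = 0" unfolding dd_def using dl A by auto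
    have r4: "max 0 (int b1 - int ((q - 1) div 2)) = 0" using A by auto
    have r5: "min (int b1 + e) (int (q div 2)) = int b1 + e" unfolding e_def using A by auto
    have L: "2 * (b1*b1 - S + (min b1 (q-1-b1) - (q-1-b0)) + (b0 - max b1 (q-1-b1))
            + (if b1 < q-1-b1 \<and> q-1-b1 \<le> b0 \<and> q-1-b0 \<le> b1 then 1 else 0)) + (b1 + 1 - (q-1-b1))
          = 2 * (b1 * b1) + 4 * (b0 + b1 + 1 - q) + (if b0 + b1 \<ge> q - 1 then 2 else 0)"
      using A S0 b by auto
    have "cform q ?m = 2 * int b1 * int b1 + 4 * max 0 (int b0 - (int q - 1 - int b1) + 1) - 2 * e"
      unfolding cf r1 r2 r3 r4 r5 using P' by simp
    also have "\<dots> = int (2 * (b1 * b1) + 4 * (b0 + b1 + 1 - q) + (if b0 + b1 \<ge> q - 1 then 2 else 0))"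
      unfolding e_def using q2 by (auto simp: of_nat_diff)
    finally show ?thesis unfolding L .
  next
    case B
    then have S0: "S = 0" using S by simp
    have qB: "q = 2 * b1 + 1" using B q2 by linarith
    have d: "q div 2 = b1" "(q + 1) div 2 = b1 + 1" "(q - 1) div 2 = b1" using qB by auto
    have r1: "max 0 (int b1 - int ((q + 1) div 2)) = 0" using d by auto
    have r2: "max (int q - 1 - int b1) (int b1) = int b1" using qB by auto
    have r3: "dd = 1" unfolding dd_def using dl qB d b by auto
    have r4: "max 0 (int b1 - int ((q - 1) div 2)) = 0" using d by auto
    have r5: "min (int b1 + e) (int (q div 2)) = int b1" unfolding e_def using qB d b by auto
    have L: "2 * (b1*b1 - S + (min b1 (q-1-b1) - (q-1-b0)) + (b0 - max b1 (q-1-b1))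
            + (if b1 < q-1-b1 \<and> q-1-b1 \<le> b0 \<and> q-1-b0 \<le> b1 then 1 else 0)) + (b1 + 1 - (q-1-b1))
          = 2 * (b1 * b1) + 4 * (b0 - b1) + 1"
      using B S0 b qB by auto
    have "cform q ?m = 2 * int b1 * int b1 + 4 * (int b0 - int b1) + 1"
      unfolding cf r1 r2 r3 r4 r5 using P' b by simp
    also have "\<dots> = int (2 * (b1 * b1) + 4 * (b0 - b1) + 1)"
      using b by (auto simp: of_nat_diff)
    finally show ?thesis unfolding L .
  next
    case C
    define h where "h = q - 1 - b1"
    have hq: "q = h + b1 + 1" unfolding h_def using b by linarith
    define N where "N = b1 - h"
    have bN: "b1 = h + N" "1 \<le> N" using C unfolding N_def h_def by linarith+
    define D0 where "D0 = b0 - b1"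
    have bD: "b0 = b1 + D0" "D0 \<le> h" using b hq unfolding D0_def by linarith+
    have S2: "2 * S = N * (N - 1)" using S unfolding h_def[symmetric] N_def[symmetric] .
    have SN: "2 * S \<le> 2 * (b1 * b1)"
    proof -
      have "N * (N - 1) \<le> b1 * b1" using bN by (intro mult_le_mono) auto
      then show ?thesis using S2 by linarith
    qed
    have L: "2 * (b1*b1 - S + (min b1 (q-1-b1) - (q-1-b0)) + (b0 - max b1 (q-1-b1))
            + (if b1 < q-1-b1 \<and> q-1-b1 \<le> b0 \<and> q-1-b0 \<le> b1 then 1 else 0)) + (b1 + 1 - (q-1-b1))
          = 2 * (b1 * b1) - 2 * S + 4 * (b0 - b1) + (2 * b1 + 2 - q)"
    proof -
      have e1: "q - 1 - b1 = h" "q - 1 - b0 = h - D0" using hq bD by simp_all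
      have e2: "min b1 h = h" "max b1 h = b1" "\<not> b1 < h" using bN by auto
      have e3: "h - (h - D0) = D0" using bD by simp
      show ?thesis unfolding e1 e2 e3 using SN bD bN hq by simp
    qed
    have IL: "int (2 * (b1 * b1) - 2 * S + 4 * (b0 - b1) + (2 * b1 + 2 - q)) =
       2 * int b1 * int b1 - int (2 * S) + 4 * (int b0 - int b1) + (2 * int b1 + 2 - int q)"
      using SN bD bN hq by (simp add: of_nat_diff)
    have SI: "int (2 * S) = (2 * int b1 + 1 - int q) * (2 * int b1 - int q)"
    proof -
      have "int (2 * S) = int N * (int N - 1)" using S2 bN by (simp add: of_nat_diff)
      moreover have "int N = 2 * int b1 + 1 - int q" using bN hq by simp
      ultimately show ?thesis by simp
    qed
    have r2: "max (int q - 1 - int b1) (int b1) = int b1" using C by auto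
    have r5: "min (int b1 + e) (int (q div 2)) = int (q div 2)" unfolding e_def using C b by auto
    have r4: "max 0 (int b1 - int ((q - 1) div 2)) = int b1 - int ((q - 1) div 2)" using C by auto
    show ?thesis
    proof (cases "even q")
      case True
      then obtain k where k: "q = 2 * k" by blast
      have d: "q div 2 = k" "(q + 1) div 2 = k" "(q - 1) div 2 = k - 1" using k q2 by auto
      have kb: "k \<le> b1" "1 \<le> k" using C k q2 by auto
      have r1: "max 0 (int b1 - int ((q + 1) div 2)) = int b1 - int k" using d kb by auto
      have r3: "dd = 0" unfolding dd_def using True by auto
      have SS2: "int (2 * S) = (2 * int b1 - 2 * int k + 1) * (2 * int b1 - 2 * int k)"
        using SI k by (simp add: algebra_simps)
      have "cform q ?m = 2 * int b1 * int b1 + 2 * int b1 - 4 * ((int b1 - int k) * (int b1 - int k))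
          + 4 * (int b0 - int b1 + 1) - 2 * (int b1 - (int k - 1)) - 2 * int k"
        unfolding cf r1 r2 r3 r4 r5 using P' b kb d by (simp add: of_nat_diff algebra_simps)
      also have "\<dots> = int (2 * (b1 * b1) - 2 * S + 4 * (b0 - b1) + (2 * b1 + 2 - q))"
      proof -
        have kq: "int q = 2 * int k" using k by simp
        show ?thesis unfolding IL using SS2 kq by algebra
      qed
      finally show ?thesis unfolding L .
    next
      case False
      then obtain k where k: "q = 2 * k + 1" by (metis oddE)
      have d: "q div 2 = k" "(q + 1) div 2 = k + 1" "(q - 1) div 2 = k" using k by auto
      have kb: "k + 1 \<le> b1" using C k by auto
      have r1: "max 0 (int b1 - int ((q + 1) div 2)) = int b1 - int k - 1" using d kb by auto
      have r3: "dd = 1" unfolding dd_def using False dl d kb by auto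
      have SS2: "int (2 * S) = (2 * int b1 - 2 * int k) * (2 * int b1 - 2 * int k - 1)"
        using SI k by (simp add: algebra_simps)
      have "cform q ?m = 2 * int b1 * int b1 + 2 * int b1 - 4 * ((int b1 - int k - 1) * (int b1 - int k))
          + 4 * (int b0 - int b1 + 1) - 3 - 2 * (int b1 - int k) - 2 * int k"
        unfolding cf r1 r2 r3 r4 r5 using P' b kb d by (simp add: of_nat_diff algebra_simps)
      also have "\<dots> = int (2 * (b1 * b1) - 2 * S + 4 * (b0 - b1) + (2 * b1 + 2 - q))"
      proof -
        have kq: "int q = 2 * int k + 1" using k by simp
        show ?thesis unfolding IL using SS2 kq by algebra
      qed
      finally show ?thesis unfolding L .
    qed
  qed
qed

definition sq :: "nat \<Rightarrow> nat \<Rightarrow> nat" where "sq q i = i * q mod cyc_n q"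

definition Lx :: "nat \<Rightarrow> nat \<Rightarrow> nat" where "Lx q x = min x (sq q x)"

definition Lp :: "nat \<Rightarrow> nat \<Rightarrow> nat \<Rightarrow> nat" where "Lp q a b = max a b + min a b * q"

context
  fixes q :: nat
  assumes q2: "q \<ge> 2"
begin

lemma cn_eq: "cyc_n q + 1 = q * q"
proof -
  have "q * q \<ge> 1" using q2 by simp
  then show ?thesis unfolding cyc_n_def power2_eq_square by simp
qed

lemma cn_ge: "cyc_n q \<ge> 3"
proof -
  have "q * q \<ge> 2 * 2" using q2 by (intro mult_mono) auto
  then show ?thesis using cn_eq by simp
qed

lemma sq_lt: "sq q x < cyc_n q" unfolding sq_def using cn_ge by simp

lemma sq_sq: "x < cyc_n q \<Longrightarrow> sq q (sq q x) = x"
proof -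
  assume x: "x < cyc_n q"
  have "sq q (sq q x) = x * q * q mod cyc_n q" unfolding sq_def by (simp add: mod_mult_left_eq)
  also have "x * q * q = x * cyc_n q + x" using cn_eq by (metis add_mult_distrib2 mult.assoc mult.right_neutral)
  finally show ?thesis using x by simp
qed

lemma pow_cases: "x * q ^ s mod cyc_n q = (if even s then x mod cyc_n q else x * q mod cyc_n q)"
proof (induction s)
  case 0 then show ?case by simp
next
  case (Suc s)
  have "x * q ^ Suc s mod cyc_n q = (x * q ^ s mod cyc_n q) * q mod cyc_n q"
    by (simp add: mod_mult_left_eq mult.assoc mult.commute[of q])
  also have "\<dots> = (if even (Suc s) then x mod cyc_n q else x * q mod cyc_n q)"
  proof (cases "even s")
    case True then show ?thesis using Suc by (simp add: mod_mult_left_eq)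
  next
    case False
    have "(x * q mod cyc_n q) * q mod cyc_n q = x * q * q mod cyc_n q" by (simp add: mod_mult_left_eq)
    also have "x * q * q = x * cyc_n q + x" using cn_eq by (metis add_mult_distrib2 mult.assoc mult.right_neutral)
    finally show ?thesis using Suc False by simp
  qed
  finally show ?case .
qed

lemma coset_eq: "x < cyc_n q \<Longrightarrow> cyc_coset q x = {x, sq q x}"
proof -
  assume x: "x < cyc_n q"
  have pc: "\<And>s. x * q ^ s mod cyc_n q = (if even s then x else x * q mod cyc_n q)"
    using pow_cases x by simp
  have "cyc_coset q x = {(if even s then x else x * q mod cyc_n q) | s::nat. True}"
    unfolding cyc_coset_def by (simp only: pc)
  also have "\<dots> = {x, sq q x}" unfolding sq_def
  proof
    show "{(if even s then x else x * q mod cyc_n q) | s::nat. True} \<subseteq> {x, x * q mod cyc_n q}" by auto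
    show "{x, x * q mod cyc_n q} \<subseteq> {(if even s then x else x * q mod cyc_n q) | s::nat. True}"
    proof
      fix y assume "y \<in> {x, x * q mod cyc_n q}"
      then show "y \<in> {(if even s then x else x * q mod cyc_n q) | s::nat. True}"
      proof
        assume "y = x" then show ?thesis by (intro CollectI exI[of _ 0]) simp
      next
        assume "y \<in> {x * q mod cyc_n q}" then show ?thesis by (intro CollectI exI[of _ 1]) simp
      qed
    qed
  qed
  finally show ?thesis .
qed

lemma leaders_eq: "coset_leaders q = {x. x < cyc_n q \<and> x \<le> sq q x}"
  unfolding coset_leaders_def using coset_eq by (auto simp: min_def split: if_splits)

lemma digits: "x < q * q \<Longrightarrow> x = x mod q + (x div q) * q \<and> x mod q < q \<and> x div q < q"
  using q2 by (auto simp: less_mult_imp_div_less)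

lemma n_digits: "cyc_n q = (q - 1) + (q - 1) * q"
proof -
  have "(q - 1) + (q - 1) * q + 1 = q * q" using q2
    by (metis (no_types, lifting) Suc_diff_1 add.commute add_Suc_right less_le_trans mult_Suc numeral_2_eq_2 plus_1_eq_Suc zero_less_Suc)
  then show ?thesis using cn_eq by simp
qed

lemma sq_digits:
  assumes x: "x < cyc_n q"
  shows "sq q x = x div q + (x mod q) * q"
proof -
  let ?a = "x mod q" and ?b = "x div q"
  have xq: "x < q * q" using x cn_eq by simp
  have d: "x = ?a + ?b * q" "?a < q" "?b < q" using digits[OF xq] by auto
  have "x * q = (?b + ?a * q) + ?b * cyc_n q"
  proof -
    have "x * q = ?a * q + ?b * (q * q)" using d(1) by (metis add_mult_distrib mult.assoc)
    also have "\<dots> = ?a * q + ?b * (cyc_n q + 1)" using cn_eq by simp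
    finally show ?thesis by (simp add: algebra_simps)
  qed
  then have "sq q x = (?b + ?a * q) mod cyc_n q" unfolding sq_def by simp
  moreover have "?b + ?a * q < cyc_n q"
  proof -
    have b1: "?b \<le> q - 1" using d(3) by simp
    have "?a \<le> q - 1" using d(2) by simp
    then have a1: "?a * q \<le> (q - 1) * q" by (rule mult_le_mono1)
    then have le: "?b + ?a * q \<le> (q - 1) + (q - 1) * q" using b1 by (rule add_le_mono[rotated])
    have "?b + ?a * q \<noteq> (q - 1) + (q - 1) * q"
    proof
      assume eq: "?b + ?a * q = (q - 1) + (q - 1) * q"
      then have "?b = q - 1" "?a * q = (q - 1) * q" using b1 a1 by linarith+
      then have "?b = q - 1 \<and> ?a = q - 1" using q2 by simp
      then have "x = cyc_n q" using d(1) n_digits by simp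
      then show False using x by simp
    qed
    then show ?thesis using le n_digits by simp
  qed
  ultimately show ?thesis by simp
qed

lemma Lx_digits:
  assumes x: "x < cyc_n q"
  shows "Lx q x = Lp q (x mod q) (x div q)"
proof -
  have xq: "x < q * q" using x cn_eq by simp
  obtain a b where ab: "a = x mod q" "b = x div q" by blast
  have d: "x = a + b * q" "a < q" "b < q" using digits[OF xq] ab by auto
  have s: "sq q x = b + a * q" using sq_digits[OF x] ab by simp
  have c: "(a + b * q \<le> b + a * q) = (b \<le> a)" using lex_le[of a q b b a] d by auto
  have "Lx q x = min (a + b * q) (b + a * q)" unfolding Lx_def s using d(1) by simp
  also have "\<dots> = Lp q a b" unfolding Lp_def using c by (auto simp: min_def max_def)
  finally show ?thesis using ab by simp
qed


lemma fin_LS: "finite (coset_leaders q)" unfolding leaders_eq by simp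

abbreviation "xsL \<equiv> sorted_list_of_set (coset_leaders q)"

lemma len_xs: "length xsL = card (coset_leaders q)" using fin_LS by simp

lemma xs_strict: "i < j \<Longrightarrow> j < length xsL \<Longrightarrow> xsL ! i < xsL ! j"
  using sorted_wrt_nth_less[OF strict_sorted_list_of_set] by blast

lemma xs_mono_iff: "i < length xsL \<Longrightarrow> j < length xsL \<Longrightarrow> (xsL ! i \<le> xsL ! j) = (i \<le> j)"
  using xs_strict by (metis leD le_less_linear nat_less_le order_refl)

lemma xs_mem: "j < length xsL \<Longrightarrow> xsL ! j \<in> coset_leaders q"
  using fin_LS by (metis nth_mem set_sorted_list_of_set)

lemma xs_ex: "l \<in> coset_leaders q \<Longrightarrow> \<exists>j<length xsL. xsL ! j = l"
  using fin_LS by (metis in_set_conv_nth set_sorted_list_of_set)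

lemma Lx_lt: "x < cyc_n q \<Longrightarrow> Lx q x < cyc_n q" unfolding Lx_def by simp

lemma Lx_leader: "x < cyc_n q \<Longrightarrow> Lx q x \<in> coset_leaders q"
  unfolding leaders_eq Lx_def using sq_sq sq_lt by (auto simp: min_def)

lemma Lx_of_coset: "l \<in> coset_leaders q \<Longrightarrow> x \<in> cyc_coset q l \<Longrightarrow> Lx q x = l"
  unfolding leaders_eq using coset_eq sq_sq by (auto simp: Lx_def min_def)

lemma in_coset_Lx: "x < cyc_n q \<Longrightarrow> x \<in> cyc_coset q (Lx q x)"
  using coset_eq Lx_lt sq_sq by (auto simp: Lx_def min_def)

lemma Lx_sq: "x < cyc_n q \<Longrightarrow> Lx q (sq q x) = Lx q x"
  unfolding Lx_def using sq_sq by (simp add: min.commute)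

lemma leader_eq: "leader q j = xsL ! j" unfolding leader_def by simp

lemma Delta_eq:
  assumes t: "t < length xsL"
  shows "Delta q t = {x. x < cyc_n q \<and> Lx q x \<le> leader q t}"
proof
  show "Delta q t \<subseteq> {x. x < cyc_n q \<and> Lx q x \<le> leader q t}"
  proof
    fix x assume "x \<in> Delta q t"
    then obtain j where j: "j \<le> t" "x \<in> cyc_coset q (xsL ! j)" unfolding Delta_def leader_eq by auto
    have jl: "j < length xsL" using j t by simp
    have mem: "xsL ! j \<in> coset_leaders q" using xs_mem[OF jl] .
    then have "xsL ! j < cyc_n q" unfolding leaders_eq by simp
    then have "x < cyc_n q" using j(2) coset_eq sq_lt by auto
    moreover have "Lx q x = xsL ! j" using Lx_of_coset[OF mem j(2)] .
    moreover have "xsL ! j \<le> xsL ! t" using xs_mono_iff[OF jl t] j by simp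
    ultimately show "x \<in> {x. x < cyc_n q \<and> Lx q x \<le> leader q t}" unfolding leader_eq by simp
  qed
  show "{x. x < cyc_n q \<and> Lx q x \<le> leader q t} \<subseteq> Delta q t"
  proof
    fix x assume "x \<in> {x. x < cyc_n q \<and> Lx q x \<le> leader q t}"
    then have x: "x < cyc_n q" "Lx q x \<le> xsL ! t" unfolding leader_eq by auto
    obtain j where j: "j < length xsL" "xsL ! j = Lx q x" using xs_ex[OF Lx_leader[OF x(1)]] by blast
    have "j \<le> t" using xs_mono_iff[OF j(1) t] j x by simp
    moreover have "x \<in> cyc_coset q (xsL ! j)" using in_coset_Lx[OF x(1)] j by simp
    ultimately show "x \<in> Delta q t" unfolding Delta_def leader_eq by auto
  qed
qed

lemma Delta_card:
  assumes t: "t < length xsL"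
  shows "(\<Sum>j\<in>{0..t}. card (cyc_coset q (leader q j))) = card (Delta q t)"
proof -
  have "card (Delta q t) = (\<Sum>j\<in>{0..t}. card (cyc_coset q (leader q j)))"
    unfolding Delta_def
  proof (rule card_UN_disjoint)
    show "finite {0..t}" by simp
    show "\<forall>i\<in>{0..t}. finite (cyc_coset q (leader q i))"
    proof
      fix i assume i: "i \<in> {0..t}"
      then have "xsL ! i \<in> coset_leaders q" using xs_mem t by simp
      then have "xsL ! i < cyc_n q" unfolding leaders_eq by simp
      then show "finite (cyc_coset q (leader q i))" using coset_eq leader_eq by simp
    qed
    show "\<forall>i\<in>{0..t}. \<forall>j\<in>{0..t}. i \<noteq> j \<longrightarrow> cyc_coset q (leader q i) \<inter> cyc_coset q (leader q j) = {}"
    proof (intro ballI impI)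
      fix i j assume ij: "i \<in> {0..t}" "j \<in> {0..t}" "i \<noteq> j"
      have il: "i < length xsL" and jl: "j < length xsL" using ij t by auto
      show "cyc_coset q (leader q i) \<inter> cyc_coset q (leader q j) = {}"
      proof (rule ccontr)
        assume "cyc_coset q (leader q i) \<inter> cyc_coset q (leader q j) \<noteq> {}"
        then obtain x where "x \<in> cyc_coset q (xsL ! i)" "x \<in> cyc_coset q (xsL ! j)" unfolding leader_eq by blast
        then have "xsL ! i = xsL ! j" using Lx_of_coset xs_mem il jl by metis
        then show False using xs_mono_iff[OF il jl] xs_mono_iff[OF jl il] ij by simp
      qed
    qed
  qed
  then show ?thesis by simp
qed

lemma Delta_lower:
  assumes t: "t + 1 < length xsL"
  shows "{..<leader q (t + 1)} \<subseteq> Delta q t"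
proof
  fix x assume x: "x \<in> {..<leader q (t + 1)}"
  have "xsL ! (t + 1) \<in> coset_leaders q" using xs_mem t by simp
  then have "xsL ! (t + 1) < cyc_n q" unfolding leaders_eq by simp
  then have xn: "x < cyc_n q" using x leader_eq by simp
  obtain j where j: "j < length xsL" "xsL ! j = Lx q x" using xs_ex[OF Lx_leader[OF xn]] by blast
  have "Lx q x \<le> x" unfolding Lx_def by simp
  then have "xsL ! j < xsL ! (t + 1)" using x j leader_eq by simp
  then have "j \<le> t" using xs_mono_iff[OF t j(1)] by simp
  then have "Lx q x \<le> leader q t" using xs_mono_iff[OF j(1)] t j leader_eq by simp
  moreover have tl: "t < length xsL" using t by simp
  ultimately show "x \<in> Delta q t" using Delta_eq[OF tl] xn by simp
qed

lemma leader_digits: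
  assumes "l \<in> coset_leaders q"
  shows "l div q \<le> l mod q" "l < cyc_n q"
proof -
  have l: "l < cyc_n q" "l \<le> sq q l" using assms unfolding leaders_eq by auto
  have xq: "l < q * q" using l cn_eq by simp
  have d: "l = l mod q + l div q * q" "l mod q < q" "l div q < q" using digits[OF xq] by auto
  have "l mod q + l div q * q \<le> l div q + l mod q * q" using l(2) sq_digits[OF l(1)] d(1) by simp
  then show "l div q \<le> l mod q" using lex_le[of "l mod q" q "l div q" "l div q" "l mod q"] d by auto
  show "l < cyc_n q" using l by simp
qed

lemma Delta_sub: "t < length xsL \<Longrightarrow> Delta q t \<subseteq> {..<cyc_n q}"
  using Delta_eq by auto

lemma Delta_sq: "t < length xsL \<Longrightarrow> x \<in> Delta q t \<Longrightarrow> sq q x \<in> Delta q t"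
  using Delta_eq Lx_sq sq_lt by auto

end

definition Rset :: "nat \<Rightarrow> nat \<Rightarrow> (nat \<times> nat) set" where
  "Rset q m = {(a, b). a < q \<and> b < q \<and> Lp q a b \<le> m \<and> Lp q (q - 1 - a) (q - 1 - b) \<le> m}"

definition Dm :: "nat \<Rightarrow> nat \<Rightarrow> nat set" where
  "Dm q m = {x. x < cyc_n q \<and> Lx q x \<le> m}"

context
  fixes q :: nat
  assumes q2: "q \<ge> 2"
begin

lemma digit_simps: "a < q \<Longrightarrow> (a + b * q) mod q = a" "a < q \<Longrightarrow> (a + b * q) div q = b"
  using q2 by auto

lemma Lp_n: "Lp q (q - 1) (q - 1) = cyc_n q"
  unfolding Lp_def using n_digits[OF q2] by simp

lemma compl_digits:
  assumes "a < q" "b < q"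
  shows "cyc_n q - (a + b * q) = (q - 1 - a) + (q - 1 - b) * q"
proof -
  have "(q - 1 - a) + (q - 1 - b) * q + (a + b * q) = (q - 1) + (q - 1) * q"
  proof -
    have "q - 1 - b + b = q - 1" using assms by simp
    then have "(q - 1 - b) * q + b * q = (q - 1) * q" by (metis add_mult_distrib)
    then show ?thesis using assms by linarith
  qed
  then show ?thesis using n_digits[OF q2] by (metis diff_add_inverse2)
qed

lemma card_Dp:
  assumes m: "m < cyc_n q"
  shows "card {i \<in> Dm q m. 0 < i \<and> cyc_n q - i \<in> Dm q m} = card (Rset q m)"
proof -
  let ?f = "\<lambda>(a, b). a + b * q"
  have inj: "inj_on ?f (Rset q m)"
  proof (rule inj_onI)
    fix x y assume x: "x \<in> Rset q m" and y: "y \<in> Rset q m" and e: "?f x = ?f y"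
    obtain a b where ab: "x = (a, b)" "a < q" "b < q" using x unfolding Rset_def by auto
    obtain c d where cd: "y = (c, d)" "c < q" "d < q" using y unfolding Rset_def by auto
    have "a + b * q = c + d * q" using e ab cd by simp
    then have "a = c" "b = d" using digit_simps ab cd by metis+
    then show "x = y" using ab cd by simp
  qed
  have img: "?f ` Rset q m = {i \<in> Dm q m. 0 < i \<and> cyc_n q - i \<in> Dm q m}"
  proof
    show "?f ` Rset q m \<subseteq> {i \<in> Dm q m. 0 < i \<and> cyc_n q - i \<in> Dm q m}"
    proof
      fix i assume "i \<in> ?f ` Rset q m"
      then obtain a b where ab: "i = a + b * q" "a < q" "b < q" "Lp q a b \<le> m"
          "Lp q (q - 1 - a) (q - 1 - b) \<le> m" unfolding Rset_def by auto
      have nq: "\<not> (a = q - 1 \<and> b = q - 1)" using ab(4) Lp_n m by auto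
      have n0: "\<not> (a = 0 \<and> b = 0)"
      proof
        assume "a = 0 \<and> b = 0"
        then have "Lp q (q - 1 - a) (q - 1 - b) = cyc_n q" using Lp_n by simp
        then show False using ab(5) m by simp
      qed
      have le: "i \<le> cyc_n q"
      proof -
        have "a \<le> q - 1" "b \<le> q - 1" using ab by auto
        then have "a + b * q \<le> (q - 1) + (q - 1) * q" by (intro add_le_mono mult_le_mono1)
        then show ?thesis using ab(1) n_digits[OF q2] by simp
      qed
      have i_ne: "i \<noteq> cyc_n q"
      proof
        assume "i = cyc_n q"
        then have eq: "a + b * q = (q - 1) + (q - 1) * q" using ab(1) n_digits[OF q2] by simp
        have q1: "q - 1 < q" using q2 by simp
        have "a = (a + b * q) mod q" using digit_simps(1)[OF ab(2)] by simp
        also have "\<dots> = q - 1" unfolding eq using digit_simps(1)[OF q1] by simp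
        finally have "a = q - 1" .
        have "b = (a + b * q) div q" using digit_simps(2)[OF ab(2)] by simp
        also have "\<dots> = q - 1" unfolding eq using digit_simps(2)[OF q1] by simp
        finally have "b = q - 1" .
        then show False using nq \<open>a = q - 1\<close> by simp
      qed
      have il: "i < cyc_n q" using le i_ne by simp
      have ipos: "0 < i" using n0 ab(1) q2 by auto
      have Li: "Lx q i = Lp q a b" using Lx_digits[OF q2 il] ab digit_simps by simp
      have ci: "cyc_n q - i = (q - 1 - a) + (q - 1 - b) * q" using compl_digits[OF ab(2,3)] ab(1) by simp
      have cl: "cyc_n q - i < cyc_n q" using ipos il by simp
      have Lc: "Lx q (cyc_n q - i) = Lp q (q - 1 - a) (q - 1 - b)"
        using Lx_digits[OF q2 cl] ci digit_simps[of "q - 1 - a" "q - 1 - b"] q2 by simp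
      show "i \<in> {i \<in> Dm q m. 0 < i \<and> cyc_n q - i \<in> Dm q m}"
        unfolding Dm_def using il Li ab ipos cl Lc by simp
    qed
    show "{i \<in> Dm q m. 0 < i \<and> cyc_n q - i \<in> Dm q m} \<subseteq> ?f ` Rset q m"
    proof
      fix i assume i: "i \<in> {i \<in> Dm q m. 0 < i \<and> cyc_n q - i \<in> Dm q m}"
      then have il: "i < cyc_n q" "Lx q i \<le> m" "0 < i" "Lx q (cyc_n q - i) \<le> m" unfolding Dm_def by auto
      let ?a = "i mod q" and ?b = "i div q"
      have iq: "i < q * q" using il cn_eq[OF q2] by simp
      have d: "i = ?a + ?b * q" "?a < q" "?b < q" using digits[OF q2 iq] by auto
      have ci: "cyc_n q - i = (q - 1 - ?a) + (q - 1 - ?b) * q" using compl_digits[OF d(2,3)] d(1) by simp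
      have cl: "cyc_n q - i < cyc_n q" using il by simp
      have "Lx q (cyc_n q - i) = Lp q (q - 1 - ?a) (q - 1 - ?b)"
        using Lx_digits[OF q2 cl] ci digit_simps[of "q - 1 - ?a" "q - 1 - ?b"] q2 by simp
      moreover have "Lx q i = Lp q ?a ?b" using Lx_digits[OF q2 il(1)] .
      ultimately have "(?a, ?b) \<in> Rset q m" unfolding Rset_def using il d by simp
      then show "i \<in> ?f ` Rset q m" using d(1) by (intro image_eqI[of _ _ "(?a, ?b)"]) auto
    qed
  qed
  show ?thesis using card_image[OF inj] img by simp
qed

end

lemma S_sum: "2 * (\<Sum>s<B. s - h) = (B - h) * (B - (h::nat) - 1)"
proof (induction B)
  case 0 then show ?case by simp
next
  case (Suc B)
  have "2 * (\<Sum>s<Suc B. s - h) = (B - h) * (B - h - 1) + 2 * (B - h)" using Suc by simp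
  also have "\<dots> = (Suc B - h) * (Suc B - h - 1)"
  proof (cases "h \<le> B")
    case True
    then obtain d where "B = h + d" by (metis le_add_diff_inverse)
    then show ?thesis by (cases d) (auto simp: algebra_simps Suc_diff_le)
  next
    case False then show ?thesis by simp
  qed
  finally show ?case .
qed

lemma Bs_lt_gen:
  fixes s B1 B0 H H0 q :: nat
  assumes "s < B1" "H < q"
  shows "{l. s < l \<and> l < q \<and> (s < B1 \<or> (s = B1 \<and> l \<le> B0)) \<and> (H < l \<or> (l = H \<and> H0 \<le> s))}
    = {max s H<..<q} \<union> (if s < H \<and> H0 \<le> s then {H} else {})"
  using assms by (auto simp: max_def)

context
  fixes q b0 b1 :: nat
  assumes q2: "q \<ge> 2" and b: "b1 \<le> b0" "b0 < q"
begin

abbreviation "hh \<equiv> q - 1 - b1"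
abbreviation "h0 \<equiv> q - 1 - b0"
abbreviation "mm \<equiv> b0 + b1 * q"

definition c1 :: "nat \<Rightarrow> nat \<Rightarrow> bool" where "c1 s l \<longleftrightarrow> s < b1 \<or> (s = b1 \<and> l \<le> b0)"
definition c2 :: "nat \<Rightarrow> nat \<Rightarrow> bool" where "c2 s l \<longleftrightarrow> hh < l \<or> (l = hh \<and> h0 \<le> s)"

lemma P1c: "a < q \<Longrightarrow> b' < q \<Longrightarrow> (Lp q a b' \<le> mm) = c1 (min a b') (max a b')"
  unfolding Lp_def c1_def by (rule lex_le) (use b in auto)

lemma P2c:
  assumes "a < q" "b' < q"
  shows "(Lp q (q - 1 - a) (q - 1 - b') \<le> mm) = c2 (min a b') (max a b')"
proof -
  have mx: "max (q - 1 - a) (q - 1 - b') = q - 1 - min a b'" "min (q - 1 - a) (q - 1 - b') = q - 1 - max a b'"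
    by (auto simp: max_def min_def)
  have "(Lp q (q - 1 - a) (q - 1 - b') \<le> mm) = (q - 1 - max a b' < b1 \<or> (q - 1 - max a b' = b1 \<and> q - 1 - min a b' \<le> b0))"
    unfolding Lp_def mx using lex_le[of "q - 1 - min a b'" q b0 "q - 1 - max a b'" b1] b q2 by auto
  also have "\<dots> = c2 (min a b') (max a b')" unfolding c2_def using assms b by auto
  finally show ?thesis .
qed

lemma Rset_iff: "(a, b') \<in> Rset q mm \<longleftrightarrow> a < q \<and> b' < q \<and> c1 (min a b') (max a b') \<and> c2 (min a b') (max a b')"
  unfolding Rset_def using P1c P2c by auto

definition Bs :: "nat \<Rightarrow> nat set" where "Bs s = {l. s < l \<and> l < q \<and> c1 s l \<and> c2 s l}"

lemma Rlt: "{x \<in> Rset q mm. fst x < snd x} = Sigma {..<q} Bs"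
  unfolding Bs_def using Rset_iff by (auto simp: min_def max_def)

lemma R_sym1: "(a, c) \<in> Rset q mm \<Longrightarrow> (c, a) \<in> Rset q mm"
proof -
  assume h: "(a, c) \<in> Rset q mm"
  have e: "min c a = min a c" "max c a = max a c" by (rule min.commute, rule max.commute)
  show ?thesis using h unfolding Rset_iff e by (elim conjE) (intro conjI)
qed

lemma R_sym: "(a, c) \<in> Rset q mm \<longleftrightarrow> (c, a) \<in> Rset q mm"
  using R_sym1 by blast

lemma Rgt: "{x \<in> Rset q mm. snd x < fst x} = prod.swap ` {x \<in> Rset q mm. fst x < snd x}"
proof
  show "{x \<in> Rset q mm. snd x < fst x} \<subseteq> prod.swap ` {x \<in> Rset q mm. fst x < snd x}"
  proof
    fix x assume x: "x \<in> {x \<in> Rset q mm. snd x < fst x}"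
    obtain a c where ac: "x = (a, c)" by fastforce
    have "(c, a) \<in> {x \<in> Rset q mm. fst x < snd x}" using x ac R_sym[of a c] by simp
    then show "x \<in> prod.swap ` {x \<in> Rset q mm. fst x < snd x}" using ac by (intro image_eqI[of _ _ "(c, a)"]) auto
  qed
  show "prod.swap ` {x \<in> Rset q mm. fst x < snd x} \<subseteq> {x \<in> Rset q mm. snd x < fst x}"
  proof
    fix y assume "y \<in> prod.swap ` {x \<in> Rset q mm. fst x < snd x}"
    then obtain a c where ac: "y = (c, a)" "(a, c) \<in> Rset q mm" "a < c" by auto
    then show "y \<in> {x \<in> Rset q mm. snd x < fst x}" using R_sym[of a c] by simp
  qed
qed

lemma Req: "{x \<in> Rset q mm. fst x = snd x} = (\<lambda>s. (s, s)) ` {hh..b1}"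
proof -
  have "\<And>s. s < q \<Longrightarrow> c1 s s = (s \<le> b1)" unfolding c1_def using b by auto
  moreover have "\<And>s. s < q \<Longrightarrow> c2 s s = (hh \<le> s)" unfolding c2_def using b by auto
  ultimately show ?thesis using Rset_iff b by (auto simp: image_iff)
qed

lemma fin_R: "finite (Rset q mm)"
proof -
  have "Rset q mm \<subseteq> {..<q} \<times> {..<q}" unfolding Rset_def by auto
  then show ?thesis using finite_subset by blast
qed

lemma card_R_split: "card (Rset q mm) = 2 * card (Sigma {..<q} Bs) + (b1 + 1 - hh)"
proof -
  let ?L = "{x \<in> Rset q mm. fst x < snd x}" and ?G = "{x \<in> Rset q mm. snd x < fst x}"
    and ?E = "{x \<in> Rset q mm. fst x = snd x}"
  have u: "Rset q mm = (?L \<union> ?G) \<union> ?E" by auto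
  have "card (Rset q mm) = card ((?L \<union> ?G) \<union> ?E)" by (rule arg_cong[OF u])
  also have "\<dots> = card (?L \<union> ?G) + card ?E"
    by (rule card_Un_disjoint) (use fin_R in auto)
  also have "card (?L \<union> ?G) = card ?L + card ?G"
    by (rule card_Un_disjoint) (use fin_R in auto)
  also have "card ?G = card ?L" unfolding Rgt by (rule card_image) (simp add: inj_on_def)
  also have "card ?E = b1 + 1 - hh" unfolding Req by (subst card_image) (auto simp: inj_on_def)
  finally show ?thesis unfolding Rlt by simp
qed

lemma Bs_empty: "b1 < s \<Longrightarrow> Bs s = {}" unfolding Bs_def c1_def by auto

lemma Bs_lt:
  assumes s: "s < b1"
  shows "card (Bs s) = (q - 1 - max s hh) + (if s < hh \<and> h0 \<le> s then 1 else 0)"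
proof -
  have hq: "hh < q" using q2 by simp
  have e: "Bs s = {max s hh<..<q} \<union> (if s < hh \<and> h0 \<le> s then {hh} else {})"
    unfolding Bs_def c1_def c2_def by (rule Bs_lt_gen[OF s hq])
  show ?thesis
  proof (cases "s < hh \<and> h0 \<le> s")
    case True
    then have "Bs s = insert hh {max s hh<..<q}" using e by auto
    moreover have "hh \<notin> {max s hh<..<q}" by simp
    ultimately show ?thesis using True by simp
  next
    case False
    then show ?thesis using e by simp
  qed
qed

lemma Bs_eq:
  "card (Bs b1) = (b0 - max b1 hh) + (if b1 < hh \<and> hh \<le> b0 \<and> h0 \<le> b1 then 1 else 0)"
proof -
  have e: "Bs b1 = {max b1 hh<..b0} \<union> (if b1 < hh \<and> hh \<le> b0 \<and> h0 \<le> b1 then {hh} else {})"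
    unfolding Bs_def c1_def c2_def using b by auto
  show ?thesis unfolding e by (subst card_Un_disjoint) auto
qed

lemma card_Sigma_Bs:
  "card (Sigma {..<q} Bs) = (b1 * b1 - (\<Sum>s<b1. s - hh)) + (min b1 hh - h0) + (b0 - max b1 hh)
      + (if b1 < hh \<and> hh \<le> b0 \<and> h0 \<le> b1 then 1 else 0)"
proof -
  have "card (Sigma {..<q} Bs) = (\<Sum>s<q. card (Bs s))"
    by (rule card_SigmaI) (auto simp: Bs_def)
  also have "\<dots> = (\<Sum>s<Suc b1. card (Bs s))"
    by (rule sum.mono_neutral_right) (use b Bs_empty in auto)
  also have "\<dots> = (\<Sum>s<b1. card (Bs s)) + card (Bs b1)" by simp
  also have "(\<Sum>s<b1. card (Bs s)) = (\<Sum>s<b1. (b1 - (s - hh)) + (if s < hh \<and> h0 \<le> s then 1 else 0))"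
  proof (rule sum.cong[OF refl])
    fix s assume "s \<in> {..<b1}"
    then have s: "s < b1" by simp
    have "q - 1 - max s hh = b1 - (s - hh)" using s b by (auto simp: max_def)
    then show "card (Bs s) = (b1 - (s - hh)) + (if s < hh \<and> h0 \<le> s then 1 else 0)" using Bs_lt[OF s] by simp
  qed
  also have "\<dots> = (\<Sum>s<b1. b1 - (s - hh)) + (\<Sum>s<b1. (if s < hh \<and> h0 \<le> s then 1 else 0))"
    by (rule sum.distrib)
  also have "(\<Sum>s<b1. b1 - (s - hh)) = b1 * b1 - (\<Sum>s<b1. s - hh)"
  proof -
    have "(\<Sum>s<b1. b1 - (s - hh)) = (\<Sum>s<b1. b1) - (\<Sum>s<b1. s - hh)"
      by (rule sum_subtractf_nat) auto
    then show ?thesis by simp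
  qed
  also have "(\<Sum>s<b1. (if s < hh \<and> h0 \<le> s then 1 else 0)) = card {s. s < b1 \<and> s < hh \<and> h0 \<le> s}"
    by (simp add: sum.If_cases Int_def)
  also have "{s. s < b1 \<and> s < hh \<and> h0 \<le> s} = {h0..<min b1 hh}" by auto
  finally show ?thesis using Bs_eq by simp
qed

lemma card_Rset_formula:
  "card (Rset q mm) = 2 * ((b1 * b1 - (\<Sum>s<b1. s - hh)) + (min b1 hh - h0) + (b0 - max b1 hh)
      + (if b1 < hh \<and> hh \<le> b0 \<and> h0 \<le> b1 then 1 else 0)) + (b1 + 1 - hh)"
  using card_R_split card_Sigma_Bs by simp

end

theorem mainTheorem4:
  fixes q t :: nat
  assumes "\<exists>p r. prime p \<and> r > 0 \<and> q = p ^ r"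
    and "card (UNIV :: 'a::{field,finite} set) = q ^ 2"
    and "t < leader_z q"
  shows
    "let mt = leader q t; b0 = int (mt mod q); b1 = int (mt div q); qi = int q;
         \<delta> = (if odd q \<and> 2 * mt \<ge> q^2 - 1 then 1 else 0 :: int);
         c = 4 * (b1 * (b1 + 1) div 2
                  - max 0 (b1 - (qi + 1) div 2) * (b1 - qi div 2)
                  + max 0 (b0 - max (qi - 1 - b1) b1 + 1))
             - 3 * \<delta>
             - 2 * max 0 (int (mt div (q + 1)) - (qi - 1) div 2)
             - 2 * min (int (mt div (q - 1))) (qi div 2)
     in eaqecc_params q (E_code q (Delta q t) :: ('a \<Rightarrow> 'a) set) (q^2)
          (int (q^2) - 2 * (\<Sum>j\<in>{0..t}. int (card (cyc_coset q (leader q j)))) + c)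
          (leader q (t + 1) + 1) c"
proof -
  obtain p r where pr: "prime p" "r > 0" "q = p ^ r" using assms(1) by blast
  interpret F: ffield q p r "UNIV :: 'a set"
    by unfold_locales (use pr assms(2) in auto)
  have q2: "q \<ge> 2" by (rule F.q2)
  have nn_cyc: "F.nn = cyc_n q" by (simp add: F.nn_def cyc_n_def)
  let ?xs = "sorted_list_of_set (coset_leaders q)"
  have tl: "t + 1 < length ?xs"
    using assms(3) len_xs[OF q2] unfolding leader_z_def by linarith
  have tl0: "t < length ?xs" using tl by simp
  define m where "m = leader q t"
  define G where "G = Delta q t"
  have mL: "m \<in> coset_leaders q" unfolding m_def leader_eq[OF q2] using xs_mem[OF q2 tl0] .
  have mn: "m < cyc_n q" using leader_digits(2)[OF q2 mL] .
  have sgeq: "F.sg = sq q" unfolding F.sg_def sq_def nn_cyc by (rule ext) simp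
  have Gsub: "G \<subseteq> {..<cyc_n q}" unfolding G_def using Delta_sub[OF q2 tl0] .
  have closed: "F.closedG G" unfolding F.closedG_def nn_cyc sgeq
    using Gsub Delta_sq[OF q2 tl0] unfolding G_def by auto
  have finG: "finite G" using F.closed_fin[OF closed] .
  let ?E = "E_code q G :: ('a \<Rightarrow> 'a) set"
  have dimE: "fq_dim q ?E = card G" by (rule F.dim_E[OF closed])
  have hull: "?E \<inter> eucl_dual q ?E = E_code q (G - F.Dp G)" by (rule F.hull_eq[OF closed])
  have closed2: "F.closedG (G - F.Dp G)" by (rule F.closed_diff_Dp[OF closed])
  have dimH: "fq_dim q (?E \<inter> eucl_dual q ?E) = card G - card (F.Dp G)"
  proof -
    have "F.Dp G \<subseteq> G" unfolding F.Dp_def by auto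
    then have "card (G - F.Dp G) = card G - card (F.Dp G)" using finG by (simp add: card_Diff_subset finite_subset)
    then show ?thesis unfolding hull using F.dim_E[OF closed2] by simp
  qed
  have DpG: "card (F.Dp G) \<le> card G"
    using finG by (intro card_mono) (auto simp: F.Dp_def)
  have Gm: "G = Dm q m" unfolding G_def Dm_def m_def using Delta_eq[OF q2 tl0] by simp
  have cDp: "card (F.Dp G) = card (Rset q m)"
    unfolding F.Dp_def nn_cyc Gm using card_Dp[OF q2 mn] by simp
  define b0 where "b0 = m mod q"
  define b1 where "b1 = m div q"
  have bd: "b1 \<le> b0" unfolding b0_def b1_def by (rule leader_digits(1)[OF q2 mL])
  have mq: "m < q * q" using mn cn_eq[OF q2] by simp
  have md: "m = b0 + b1 * q" "b0 < q" "b1 < q" unfolding b0_def b1_def using digits[OF q2 mq] by auto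
  have nq: "\<not> (b0 = q - 1 \<and> b1 = q - 1)"
  proof
    assume "b0 = q - 1 \<and> b1 = q - 1"
    then have "m = cyc_n q" using md(1) n_digits[OF q2] by simp
    then show False using mn by simp
  qed
  have cR: "card (Rset q m) = 2 * ((b1 * b1 - (\<Sum>s<b1. s - (q - 1 - b1))) + (min b1 (q - 1 - b1) - (q - 1 - b0))
      + (b0 - max b1 (q - 1 - b1)) + (if b1 < q - 1 - b1 \<and> q - 1 - b1 \<le> b0 \<and> q - 1 - b0 \<le> b1 then 1 else 0))
      + (b1 + 1 - (q - 1 - b1))"
    unfolding md(1) by (rule card_Rset_formula[OF q2 bd md(2)])
  have fa: "cform q (b0 + b1 * q) = int (2 * ((b1 * b1 - (\<Sum>s<b1. s - (q - 1 - b1))) + (min b1 (q - 1 - b1) - (q - 1 - b0))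
      + (b0 - max b1 (q - 1 - b1)) + (if b1 < q - 1 - b1 \<and> q - 1 - b1 \<le> b0 \<and> q - 1 - b0 \<le> b1 then 1 else 0))
      + (b1 + 1 - (q - 1 - b1)))"
    by (rule final_arith[OF q2 bd md(2) nq S_sum])
  have cf: "cform q m = int (card (F.Dp G))"
    using fa unfolding cDp cR md(1)[symmetric] .
  have sumc: "(\<Sum>j\<in>{0..t}. int (card (cyc_coset q (leader q j)))) = int (card G)"
    unfolding G_def using Delta_card[OF q2 tl0] by (metis of_nat_sum)
  have low: "{..<leader q (t + 1)} \<subseteq> G" unfolding G_def by (rule Delta_lower[OF q2 tl])
  have md2: "leader q (t + 1) + 1 \<le> min_dist (eucl_dual q ?E)" by (rule F.min_dist_ge[OF closed low])
  have main: "eaqecc_params q (E_code q (Delta q t) :: ('a \<Rightarrow> 'a) set) (q^2)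
      (int (q^2) - 2 * (\<Sum>j\<in>{0..t}. int (card (cyc_coset q (leader q j)))) + cform q (leader q t))
      (leader q (t + 1) + 1) (cform q (leader q t))"
    unfolding eaqecc_params_def Let_def m_def[symmetric] G_def[symmetric] sumc cf
    using dimE dimH DpG md2 assms(2) by simp
  show ?thesis using main unfolding cform_def Let_def .
qed

end
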